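(* Fix $\beta>0$. Let $(\tilde s_i,\tilde a_i,\tilde s_i')_{i\ge0}$ be random samples with $\tilde s_i,\tilde s_i'\in\mathcal S$, $\tilde a_i\in\mathcal A$, and $(\tilde\eta_i)_{i\ge0}$ nonnegative random step sizes, such that almost surely, for all $s'\in\mathcal S$ and $i\in\mathbb N$, $\mathbb P[\tilde s_i'=s'\mid\mathcal G_{i-1},\tilde s_i,\tilde a_i,\tilde\eta_i]=p(\tilde s_i,\tilde a_i,s')$, where $\mathcal G_{i-1}=(\tilde\eta_l,(\tilde s_l,\tilde a_l,\tilde s_l'))_{l=0}^{i-1}$; and such that for each $(s,a)\in\mathcal S\times\mathcal A$, $\sum_{i:(\tilde s_i,\tilde a_i)=(s,a)}\tilde\eta_i=\infty$ and $\sum_{i:(\tilde s_i,\tilde a_i)=(s,a)}\tilde\eta_i^2<\infty$ almost surely. Define iterates $\tilde q_i\in\mathbb R^{\mathcal S\times\mathcal A}$ by $\tilde q_0\equiv0$ and, for $i\ge0$, $\tilde z_i=r(\tilde s_i,\tilde a_i,\tilde s_i')+\max_{a'\in\mathcal A}\tilde q_i(\tilde s_i',a')-\tilde q_i(\tilde s_i,\tilde a_i)$, $\tilde q_{i+1}(\tilde s_i,\tilde a_i)=\tilde q_i(\tilde s_i,\tilde a_i)-\tilde\eta_i\,(e^{-\beta\tilde z_i}-1)$, and $\tilde q_{i+1}(s,a)=\tilde q_i(s,a)$ for $(s,a)\ne(\tilde s_i,\tilde a_i)$. If there are constants $z_{\min}\le z_{\max}$ with $\tilde z_i\in[z_{\min},z_{\max}]$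 for all $i$ almost surely, then $(\tilde q_i)$ converges almost surely to some $q_\infty$ satisfying $q_\infty=\hat B_\beta q_\infty$.
   Context: Setting: a finite MDP with state set $\mathcal S=\{1,\dots,S,e\}$, sink $e$ with $p(e,a,e)=1$, $r(e,a,e)=0$, finite action set $\mathcal A$, transition probabilities $p(s,a,s')$, rewards $r(s,a,s')$, transient under every stationary deterministic policy. $\ell_\beta(z)=\beta^{-1}(e^{-\beta z}-1)+z$ and $(\hat B_\beta q)(s,a)=\operatorname*{argmin}_{y\in\mathbb R}\mathbb E^{s,a}\big[\ell_\beta\big(r(s,a,\tilde s_1)+\max_{a'\in\mathcal A}q(\tilde s_1,a')-y\big)\big]$ with $\tilde s_1\sim p(s,a,\cdot)$. *)

theory Defs
  imports "HOL-Probability.Probability"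
begin

definition ell :: "real \<Rightarrow> real \<Rightarrow> real" where
  "ell \<beta> z = (exp (- \<beta> * z) - 1) / \<beta> + z"

definition exp_loss ::
  "real \<Rightarrow> ('s::finite \<Rightarrow> 'a::finite \<Rightarrow> 's \<Rightarrow> real) \<Rightarrow> ('s \<Rightarrow> 'a \<Rightarrow> 's \<Rightarrow> real)
    \<Rightarrow> ('s \<Rightarrow> 'a \<Rightarrow> real) \<Rightarrow> 's \<Rightarrow> 'a \<Rightarrow> real \<Rightarrow> real" where
  "exp_loss \<beta> p r q s a y =
     (\<Sum>s1\<in>UNIV. p s a s1 * ell \<beta> (r s a s1 + Max (range (q s1)) - y))"

definition Bhat ::
  "real \<Rightarrow> ('s::finite \<Rightarrow> 'a::finite \<Rightarrow> 's \<Rightarrow> real) \<Rightarrow> ('s \<Rightarrow> 'a \<Rightarrow> 's \<Rightarrow> real)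
    \<Rightarrow> ('s \<Rightarrow> 'a \<Rightarrow> real) \<Rightarrow> 's \<Rightarrow> 'a \<Rightarrow> real" where
  "Bhat \<beta> p r q s a =
     (THE y. \<forall>y'. exp_loss \<beta> p r q s a y \<le> exp_loss \<beta> p r q s a y')"

primrec nstep :: "('s::finite \<Rightarrow> 'a \<Rightarrow> 's \<Rightarrow> real) \<Rightarrow> ('s \<Rightarrow> 'a) \<Rightarrow> nat \<Rightarrow> 's \<Rightarrow> 's \<Rightarrow> real" where
  "nstep p \<pi> 0 s t = (if s = t then 1 else 0)"
| "nstep p \<pi> (Suc n) s t = (\<Sum>u\<in>UNIV. nstep p \<pi> n s u * p u (\<pi> u) t)"

definition transient_mdp ::
  "('s::finite \<Rightarrow> 'a::finite \<Rightarrow> 's \<Rightarrow> real) \<Rightarrow> ('s \<Rightarrow> 'a \<Rightarrow> 's \<Rightarrow> real) \<Rightarrow> 's \<Rightarrow> bool" where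
  "transient_mdp p r e \<longleftrightarrow>
     (\<forall>s a s'. 0 \<le> p s a s') \<and>
     (\<forall>s a. (\<Sum>s'\<in>UNIV. p s a s') = 1) \<and>
     (\<forall>a. p e a e = 1 \<and> r e a e = 0) \<and>
     (\<forall>\<pi> s. (\<lambda>n. nstep p \<pi> n s e) \<longlonglongrightarrow> 1)"

text \<open>The sigma-algebra generated by G_{i-1} = (eta_l,(s_l,a_l,s'_l))_{l<i} together with
  s_i, a_i, eta_i.\<close>
definition hist_sigma ::
  "'w measure \<Rightarrow> (nat \<Rightarrow> 'w \<Rightarrow> real) \<Rightarrow> (nat \<Rightarrow> 'w \<Rightarrow> 's) \<Rightarrow> (nat \<Rightarrow> 'w \<Rightarrow> 'a)
    \<Rightarrow> (nat \<Rightarrow> 'w \<Rightarrow> 's) \<Rightarrow> nat \<Rightarrow> 'w measure" where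
  "hist_sigma M \<eta> S A S' i = sigma (space M)
     ({\<eta> l -` B \<inter> space M | l B. l \<le> i \<and> B \<in> sets borel}
      \<union> {S l -` B \<inter> space M | l B. l \<le> i}
      \<union> {A l -` B \<inter> space M | l B. l \<le> i}
      \<union> {S' l -` B \<inter> space M | l B. l < i})"

primrec qit ::
  "real \<Rightarrow> ('s::finite \<Rightarrow> 'a::finite \<Rightarrow> 's \<Rightarrow> real) \<Rightarrow> (nat \<Rightarrow> 'w \<Rightarrow> real) \<Rightarrow> (nat \<Rightarrow> 'w \<Rightarrow> 's)
    \<Rightarrow> (nat \<Rightarrow> 'w \<Rightarrow> 'a) \<Rightarrow> (nat \<Rightarrow> 'w \<Rightarrow> 's) \<Rightarrow> nat \<Rightarrow> 'w \<Rightarrow> 's \<Rightarrow> 'a \<Rightarrow> real" where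
  "qit \<beta> r \<eta> S A S' 0 w = (\<lambda>s a. 0)"
| "qit \<beta> r \<eta> S A S' (Suc i) w =
     (let q = qit \<beta> r \<eta> S A S' i w;
          z = r (S i w) (A i w) (S' i w) + Max (range (q (S' i w))) - q (S i w) (A i w)
      in (\<lambda>s a. if (s, a) = (S i w, A i w)
                 then q s a - \<eta> i w * (exp (- \<beta> * z) - 1) else q s a))"

definition zit ::
  "real \<Rightarrow> ('s::finite \<Rightarrow> 'a::finite \<Rightarrow> 's \<Rightarrow> real) \<Rightarrow> (nat \<Rightarrow> 'w \<Rightarrow> real) \<Rightarrow> (nat \<Rightarrow> 'w \<Rightarrow> 's)
    \<Rightarrow> (nat \<Rightarrow> 'w \<Rightarrow> 'a) \<Rightarrow> (nat \<Rightarrow> 'w \<Rightarrow> 's) \<Rightarrow> nat \<Rightarrow> 'w \<Rightarrow> real" where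
  "zit \<beta> r \<eta> S A S' i w =
     (let q = qit \<beta> r \<eta> S A S' i w
      in r (S i w) (A i w) (S' i w) + Max (range (q (S' i w))) - q (S i w) (A i w))"

end

theory Submission
  imports Defs
begin

lemma decay_to_zero:
  fixes U a :: "nat \<Rightarrow> real"
  assumes U0: "\<And>n. n \<ge> N \<Longrightarrow> 0 \<le> U n"
    and Ustep: "\<And>n. n \<ge> N \<Longrightarrow> U (Suc n) \<le> (1 - a n) * U n"
    and a01: "\<And>n. n \<ge> N \<Longrightarrow> 0 \<le> a n \<and> a n \<le> 1"
    and ns: "\<not> summable a"
  shows "U \<longlonglongrightarrow> 0"
proof -
  define V where "V n = U (n + N)" for n
  have V0: "0 \<le> V n" for n using U0 by (simp add: V_def)
  have Vs: "V (Suc n) \<le> (1 - a (n + N)) * V n" for n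
    using Ustep[of "n+N"] by (simp add: V_def)
  have dec: "decseq V"
  proof (rule decseq_SucI)
    fix n
    have "(1 - a (n + N)) * V n \<le> V n"
      using a01[of "n+N"] V0[of n] by (simp add: mult_left_le_one_le)
    then show "V (Suc n) \<le> V n" using Vs[of n] by linarith
  qed
  obtain L where L: "V \<longlonglongrightarrow> L" "\<And>i. L \<le> V i"
    using decseq_convergent[OF dec, of 0] V0 by blast
  have L0: "0 \<le> L" using LIMSEQ_le_const[OF L(1), of 0] V0 by auto
  have "L = 0"
  proof (rule ccontr)
    assume "L \<noteq> 0" then have Lp: "L > 0" using L0 by simp
    have "summable (\<lambda>n. (V n - V (Suc n)) / L)"
      using summable_divide[OF telescope_summable'[OF L(1)]] by simp
    moreover have "norm (a (n + N)) \<le> (V n - V (Suc n)) / L" for n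
    proof -
      have "a (n+N) * L \<le> a (n+N) * V n" using a01[of "n+N"] L(2)[of n] by (simp add: mult_left_mono)
      then have "a (n+N) * L \<le> V n - V (Suc n)" using Vs[of n] by (simp add: algebra_simps)
      then show ?thesis using a01[of "n+N"] Lp by (simp add: field_simps)
    qed
    ultimately have "summable (\<lambda>n. a (n + N))" by (rule summable_comparison_test'[where N=0])
    then have "summable a" using summable_iff_shift by blast
    with ns show False by simp
  qed
  with L(1) have "(\<lambda>n. U (n + N)) \<longlonglongrightarrow> 0" unfolding V_def by simp
  then show ?thesis by (rule LIMSEQ_offset)
qed

lemma tendsto0_ev:
  fixes X :: "nat \<Rightarrow> real"
  assumes "X \<longlonglongrightarrow> 0" "d > 0"
  shows "eventually (\<lambda>n. \<bar>X n\<bar> \<le> d) sequentially"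
proof -
  have "eventually (\<lambda>n. dist (X n) 0 < d) sequentially" using assms tendsto_iff by blast
  then show ?thesis by eventually_elim (simp add: dist_real_def)
qed

lemma decay_delta:
  fixes Z a :: "nat \<Rightarrow> real"
  assumes dp: "\<delta> > 0"
    and Zstep: "\<And>n. n \<ge> N \<Longrightarrow> Z (Suc n) - \<delta> \<le> (1 - a n) * (max (Z n) \<delta> - \<delta>)"
    and a01: "\<And>n. n \<ge> N \<Longrightarrow> 0 \<le> a n \<and> a n \<le> 1"
    and ns: "\<not> summable a"
  shows "eventually (\<lambda>n. Z n < 2 * \<delta>) sequentially"
proof -
  define U where "U n = max (Z n) \<delta> - \<delta>" for n
  have "U \<longlonglongrightarrow> 0"
  proof (rule decay_to_zero[where N=N and a=a])
    fix n assume n: "n \<ge> N"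
    show "0 \<le> U n" by (simp add: U_def)
    have "0 \<le> (1 - a n) * (max (Z n) \<delta> - \<delta>)" using a01[OF n] by simp
    then show "U (Suc n) \<le> (1 - a n) * U n" using Zstep[OF n] by (simp add: U_def)
  qed (use a01 ns in auto)
  then have "eventually (\<lambda>n. U n < \<delta>) sequentially"
    using dp by (simp add: order_tendsto_iff)
  then show ?thesis by eventually_elim (simp add: U_def)
qed

lemma noise_avg_zero:
  fixes W a b :: "nat \<Rightarrow> real"
  assumes W: "\<And>n. W (Suc n) = (1 - a n) * W n + b n"
    and a0: "\<And>n. 0 \<le> a n" and alim: "a \<longlonglongrightarrow> 0" and ns: "\<not> summable a"
    and sb: "summable b"
  shows "W \<longlonglongrightarrow> 0"
proof -
  define R where "R n = suminf b - (\<Sum>i<n. b i)" for n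
  have Rlim: "R \<longlonglongrightarrow> 0"
  proof -
    have "(\<lambda>n. \<Sum>i<n. b i) \<longlonglongrightarrow> suminf b" using sb by (simp add: summable_LIMSEQ)
    then have "(\<lambda>n. suminf b - (\<Sum>i<n. b i)) \<longlonglongrightarrow> suminf b - suminf b"
      by (intro tendsto_diff tendsto_const)
    moreover have "R = (\<lambda>n. suminf b - (\<Sum>i<n. b i))" by (simp add: fun_eq_iff R_def)
    ultimately show ?thesis by simp
  qed
  have Rs: "R n = b n + R (Suc n)" for n by (simp add: R_def)
  define V where "V n = W n + R n" for n
  have Vs: "V (Suc n) = (1 - a n) * V n + a n * R n" for n
    using W[of n] Rs[of n] by (simp add: V_def algebra_simps)
  have ev2: "eventually (\<lambda>n. \<bar>V n\<bar> < 2 * \<delta>) sequentially" if dp: "\<delta> > 0" for \<delta>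
  proof -
    have "eventually (\<lambda>n. \<bar>R n\<bar> \<le> \<delta> \<and> a n \<le> 1) sequentially"
    proof (intro eventually_conj)
      show "eventually (\<lambda>n. \<bar>R n\<bar> \<le> \<delta>) sequentially"
        using Rlim dp by (rule tendsto0_ev)
      show "eventually (\<lambda>n. a n \<le> 1) sequentially"
        using alim by (auto simp: tendsto_iff dist_real_def elim!: allE[of _ 1] eventually_mono)
    qed
    then obtain N where N: "\<And>n. n \<ge> N \<Longrightarrow> \<bar>R n\<bar> \<le> \<delta> \<and> a n \<le> 1"
      by (auto simp: eventually_sequentially)
    show ?thesis
    proof (rule decay_delta[OF dp, where N=N and a=a])
      fix n assume n: "n \<ge> N"
      have a1: "0 \<le> a n" "a n \<le> 1" using a0 N[OF n] by auto
      have "\<bar>V (Suc n)\<bar> \<le> (1 - a n) * \<bar>V n\<bar> + a n * \<bar>R n\<bar>"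
        unfolding Vs using a1 by (simp add: abs_mult abs_triangle_ineq order_trans[OF abs_triangle_ineq])
      also have "\<dots> \<le> (1 - a n) * max \<bar>V n\<bar> \<delta> + a n * \<delta>"
        using a1 N[OF n] by (intro add_mono mult_left_mono) auto
      finally show "\<bar>V (Suc n)\<bar> - \<delta> \<le> (1 - a n) * (max \<bar>V n\<bar> \<delta> - \<delta>)"
        by (simp add: algebra_simps)
      show "0 \<le> a n \<and> a n \<le> 1" using a1 by simp
    qed (use ns in auto)
  qed
  have "V \<longlonglongrightarrow> 0"
    unfolding tendsto_iff dist_real_def
  proof (intro allI impI)
    fix e :: real assume e: "e > 0"
    from ev2[of "e/2"] e show "eventually (\<lambda>n. \<bar>V n - 0\<bar> < e) sequentially" by simp
  qed
  then have "(\<lambda>n. V n - R n) \<longlonglongrightarrow> 0 - 0" using Rlim by (intro tendsto_diff)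
  then show ?thesis by (simp add: V_def)
qed

lemma limsup_compare:
  fixes Y a b :: "nat \<Rightarrow> real"
  assumes a0: "\<And>n. 0 \<le> a n" and alim: "a \<longlonglongrightarrow> 0" and ns: "\<not> summable a"
    and sb: "summable b"
    and step: "eventually (\<lambda>n. Y (Suc n) \<le> (1 - a n) * max (Y n) 0 + b n) sequentially"
    and dp: "\<delta> > 0"
  shows "eventually (\<lambda>n. Y n \<le> \<delta>) sequentially"
proof -
  define W where "W = rec_nat 0 (\<lambda>n w. (1 - a n) * w + b n)"
  have Ws: "W (Suc n) = (1 - a n) * W n + b n" for n by (simp add: W_def)
  have Wlim: "W \<longlonglongrightarrow> 0" by (rule noise_avg_zero[OF Ws a0 alim ns sb])
  define d where "d = \<delta> / 3"
  have d: "d > 0" using dp by (simp add: d_def)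
  have "eventually (\<lambda>n. \<bar>W n\<bar> \<le> d \<and> a n \<le> 1 \<and> Y (Suc n) \<le> (1 - a n) * max (Y n) 0 + b n) sequentially"
  proof (intro eventually_conj step)
    show "eventually (\<lambda>n. \<bar>W n\<bar> \<le> d) sequentially"
      using Wlim d by (rule tendsto0_ev)
    show "eventually (\<lambda>n. a n \<le> 1) sequentially"
      using alim by (auto simp: tendsto_iff dist_real_def elim!: allE[of _ 1] eventually_mono)
  qed
  then obtain N where N: "\<And>n. n \<ge> N \<Longrightarrow> \<bar>W n\<bar> \<le> d \<and> a n \<le> 1 \<and> Y (Suc n) \<le> (1 - a n) * max (Y n) 0 + b n"
    by (auto simp: eventually_sequentially)
  have ev: "eventually (\<lambda>n. Y n - W n < 2 * d) sequentially"
  proof (rule decay_delta[OF d, where N=N and a=a])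
    fix n assume n: "n \<ge> N"
    have a1: "0 \<le> a n" "a n \<le> 1" using a0 N[OF n] by auto
    have "Y (Suc n) - W (Suc n) \<le> (1 - a n) * (max (Y n) 0 - W n)"
      using N[OF n] Ws[of n] by (simp add: algebra_simps)
    also have "\<dots> \<le> (1 - a n) * max (Y n - W n) d"
      using a1 N[OF n] by (intro mult_left_mono) auto
    finally have X: "Y (Suc n) - W (Suc n) \<le> (1 - a n) * max (Y n - W n) d" .
    show "Y (Suc n) - W (Suc n) - d \<le> (1 - a n) * (max (Y n - W n) d - d)"
    proof -
      have e1: "(1 - a n) * (max (Y n - W n) d - d) = (1 - a n) * max (Y n - W n) d - d + a n * d"
        by (simp add: algebra_simps)
      have "0 \<le> a n * d" using a1 d by simp
      then show ?thesis using X e1 by linarith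
    qed
    show "0 \<le> a n \<and> a n \<le> 1" using a1 by simp
  qed (use ns in auto)
  have "eventually (\<lambda>n. \<bar>W n\<bar> \<le> d) sequentially"
    using Wlim d by (rule tendsto0_ev)
  with ev show ?thesis
    by eventually_elim (simp add: d_def)
qed


definition Ew :: "real \<Rightarrow> ('s::finite \<Rightarrow> 'a::finite \<Rightarrow> 's \<Rightarrow> real) \<Rightarrow> ('s \<Rightarrow> 'a \<Rightarrow> 's \<Rightarrow> real)
    \<Rightarrow> ('s \<Rightarrow> 'a \<Rightarrow> real) \<Rightarrow> 's \<Rightarrow> 'a \<Rightarrow> real" where
  "Ew \<beta> p r q s a = (\<Sum>s'\<in>UNIV. p s a s' * exp (- \<beta> * (r s a s' + Max (range (q s')))))"

definition Top :: "real \<Rightarrow> ('s::finite \<Rightarrow> 'a::finite \<Rightarrow> 's \<Rightarrow> real) \<Rightarrow> ('s \<Rightarrow> 'a \<Rightarrow> 's \<Rightarrow> real)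
    \<Rightarrow> ('s \<Rightarrow> 'a \<Rightarrow> real) \<Rightarrow> 's \<Rightarrow> 'a \<Rightarrow> real" where
  "Top \<beta> p r q s a = - ln (Ew \<beta> p r q s a) / \<beta>"

lemma mdp_nonneg: "transient_mdp p r e \<Longrightarrow> 0 \<le> p s a s'"
  by (simp add: transient_mdp_def)
lemma mdp_sum1: "transient_mdp p r e \<Longrightarrow> (\<Sum>s'\<in>UNIV. p s a s') = 1"
  by (simp add: transient_mdp_def)
lemma mdp_sink: "transient_mdp p r e \<Longrightarrow> p e a e = 1 \<and> r e a e = 0"
  by (simp add: transient_mdp_def)
lemma mdp_trans: "transient_mdp p r e \<Longrightarrow> (\<lambda>n. nstep p \<pi> n s e) \<longlonglongrightarrow> 1"
  by (simp add: transient_mdp_def)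

lemma mdp_sink_only:
  assumes "transient_mdp p r e" "s' \<noteq> e"
  shows "p e a s' = 0"
proof -
  have "(\<Sum>t\<in>UNIV. p e a t) = p e a e + (\<Sum>t\<in>UNIV - {e}. p e a t)"
    by (simp add: sum.remove)
  then have "(\<Sum>t\<in>UNIV - {e}. p e a t) = 0" using mdp_sum1[OF assms(1)] mdp_sink[OF assms(1)] by simp
  then have "\<forall>t\<in>UNIV - {e}. p e a t = 0"
    using mdp_nonneg[OF assms(1)] by (subst (asm) sum_nonneg_eq_0_iff) auto
  then show ?thesis using assms(2) by simp
qed

lemma Ew_pos:
  assumes "transient_mdp p r e"
  shows "0 < Ew \<beta> p r q s a"
proof -
  have "(\<Sum>s'\<in>UNIV. p s a s') = 1" by (rule mdp_sum1[OF assms])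
  then obtain s' where s': "p s a s' \<noteq> 0" by (metis (mono_tags, lifting) sum.neutral zero_neq_one)
  then have "0 < p s a s'" using mdp_nonneg[OF assms] by (simp add: order_less_le)
  then have "0 < p s a s' * exp (- \<beta> * (r s a s' + Max (range (q s'))))" by simp
  also have "\<dots> \<le> Ew \<beta> p r q s a" unfolding Ew_def
    by (rule member_le_sum) (auto intro: mult_nonneg_nonneg mdp_nonneg[OF assms])
  finally show ?thesis .
qed

lemma exp_gt_add_one_self:
  fixes x :: real
  assumes "x \<noteq> 0"
  shows "1 + x < exp x"
proof (cases "1 + x / 2 \<ge> 0")
  case True
  have "(1 + x/2) \<le> exp (x/2)" using exp_ge_add_one_self[of "x/2"] by simp
  then have "(1 + x/2) * (1 + x/2) \<le> exp (x/2) * exp (x/2)" using True by (intro mult_mono) auto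
  also have "\<dots> = exp x" by (simp add: exp_add[symmetric])
  finally have "1 + x + x * x / 4 \<le> exp x" by (simp add: algebra_simps)
  moreover have "0 < x * x" using assms by (simp add: zero_less_mult_iff) linarith
  ultimately show ?thesis by linarith
next
  case False
  then have "1 + x < 0" by simp
  then show ?thesis using exp_gt_zero[of x] by linarith
qed

lemma Bhat_eq:
  assumes mdp: "transient_mdp p r e" and bp: "\<beta> > 0"
  shows "Bhat \<beta> p r q s a = Top \<beta> p r q s a"
proof -
  define E where "E = Ew \<beta> p r q s a"
  have Ep: "E > 0" unfolding E_def by (rule Ew_pos[OF mdp])
  define C where "C = (\<Sum>s1\<in>UNIV. p s a s1 * (r s a s1 + Max (range (q s1))))"
  have L: "exp_loss \<beta> p r q s a y = (exp (\<beta> * y) * E - 1) / \<beta> + C - y" for y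
  proof -
    have "exp_loss \<beta> p r q s a y = (\<Sum>s1\<in>UNIV. (exp (\<beta> * y) / \<beta>) * (p s a s1 * exp (- \<beta> * (r s a s1 + Max (range (q s1)))))
        + p s a s1 * (r s a s1 + Max (range (q s1))) - (1/\<beta> + y) * p s a s1)"
      unfolding exp_loss_def ell_def
    proof (intro sum.cong refl)
      fix s1
      define X where "X = r s a s1 + Max (range (q s1))"
      have e: "exp (- \<beta> * (X - y)) = exp (\<beta> * y) * exp (- \<beta> * X)"
        by (simp add: exp_add[symmetric] algebra_simps)
      show "p s a s1 * ((exp (- \<beta> * (r s a s1 + Max (range (q s1)) - y)) - 1) / \<beta> + (r s a s1 + Max (range (q s1)) - y)) =
         exp (\<beta> * y) / \<beta> * (p s a s1 * exp (- \<beta> * (r s a s1 + Max (range (q s1))))) +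
         p s a s1 * (r s a s1 + Max (range (q s1))) - (1 / \<beta> + y) * p s a s1"
        using e bp unfolding X_def[symmetric] by (simp add: field_simps)
    qed
    also have "\<dots> = (exp (\<beta> * y) / \<beta>) * E + C - (1/\<beta> + y) * (\<Sum>s1\<in>UNIV. p s a s1)"
      by (simp add: sum.distrib sum_subtractf sum_distrib_left E_def Ew_def C_def)
    also have "\<dots> = (exp (\<beta> * y) * E - 1) / \<beta> + C - y"
      using mdp_sum1[OF mdp] bp by (simp add: field_simps)
    finally show ?thesis .
  qed
  define ys where "ys = - ln E / \<beta>"
  have eys: "exp (\<beta> * ys) * E = 1" using Ep bp by (simp add: ys_def exp_minus field_simps)
  have diff: "exp_loss \<beta> p r q s a y - exp_loss \<beta> p r q s a ys = (exp (\<beta> * (y - ys)) - 1) / \<beta> - (y - ys)" for y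
  proof -
    have "exp (\<beta> * y) * E = exp (\<beta> * (y - ys))"
      using eys by (simp add: right_diff_distrib exp_diff field_simps)
    then show ?thesis unfolding L using eys by (simp add: field_simps)
  qed
  have ge: "exp_loss \<beta> p r q s a ys \<le> exp_loss \<beta> p r q s a y" for y
  proof -
    have "1 + \<beta> * (y - ys) \<le> exp (\<beta> * (y - ys))" by (rule exp_ge_add_one_self)
    then have "0 \<le> (exp (\<beta> * (y - ys)) - 1) / \<beta> - (y - ys)" using bp by (simp add: field_simps)
    then show ?thesis using diff[of y] by simp
  qed
  have uniq: "y = ys" if "\<forall>y'. exp_loss \<beta> p r q s a y \<le> exp_loss \<beta> p r q s a y'" for y
  proof (rule ccontr)
    assume "y \<noteq> ys"
    then have "\<beta> * (y - ys) \<noteq> 0" using bp by simp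
    then have "1 + \<beta> * (y - ys) < exp (\<beta> * (y - ys))" by (rule exp_gt_add_one_self)
    then have "0 < (exp (\<beta> * (y - ys)) - 1) / \<beta> - (y - ys)" using bp by (simp add: field_simps)
    then have "exp_loss \<beta> p r q s a ys < exp_loss \<beta> p r q s a y" using diff[of y] by simp
    with that show False by (meson not_le)
  qed
  have "Bhat \<beta> p r q s a = ys"
    unfolding Bhat_def using ge uniq by (intro the_equality) auto
  then show ?thesis by (simp add: Top_def ys_def E_def)
qed

lemma Max_range_ge: "(q::'s \<Rightarrow> 'a::finite \<Rightarrow> real) s a \<le> Max (range (q s))"
  by (rule Max_ge) auto

lemma Max_range_in: "\<exists>a. Max (range ((q::'s \<Rightarrow> 'a::finite \<Rightarrow> real) s)) = q s a"
proof -
  have "Max (range (q s)) \<in> range (q s)" by (rule Max_in) auto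
  then show ?thesis by (metis rangeE)
qed

lemma Max_range_le_shift:
  assumes "\<And>a. (x::'s \<Rightarrow> 'a::finite \<Rightarrow> real) s a \<le> y s a + c"
  shows "Max (range (x s)) \<le> Max (range (y s)) + c"
proof -
  obtain a where "Max (range (x s)) = x s a" using Max_range_in[of x s] by blast
  then show ?thesis using assms[of a] Max_range_ge[of y s a] by linarith
qed

lemma Max_range_const0:
  assumes "\<And>a. (x::'s \<Rightarrow> 'a::finite \<Rightarrow> real) s a = 0"
  shows "Max (range (x s)) = 0"
  using Max_range_in[of x s] assms by auto

lemma sub_Top_iff:
  assumes mdp: "transient_mdp p r e" and bp: "\<beta> > 0"
  shows "x \<le> Top \<beta> p r q s a \<longleftrightarrow> Ew \<beta> p r q s a \<le> exp (- \<beta> * x)"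
proof -
  have Ep: "0 < Ew \<beta> p r q s a" by (rule Ew_pos[OF mdp])
  have "x \<le> Top \<beta> p r q s a \<longleftrightarrow> ln (Ew \<beta> p r q s a) \<le> - \<beta> * x"
    unfolding Top_def using bp by (simp add: field_simps, arith)
  also have "\<dots> \<longleftrightarrow> Ew \<beta> p r q s a \<le> exp (- \<beta> * x)"
    using Ep by (metis exp_le_cancel_iff exp_ln)
  finally show ?thesis .
qed

lemma sup_Top_iff:
  assumes mdp: "transient_mdp p r e" and bp: "\<beta> > 0"
  shows "Top \<beta> p r q s a \<le> x \<longleftrightarrow> exp (- \<beta> * x) \<le> Ew \<beta> p r q s a"
proof -
  have Ep: "0 < Ew \<beta> p r q s a" by (rule Ew_pos[OF mdp])
  have "Top \<beta> p r q s a \<le> x \<longleftrightarrow> - \<beta> * x \<le> ln (Ew \<beta> p r q s a)"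
    unfolding Top_def using bp by (simp add: field_simps, arith)
  also have "\<dots> \<longleftrightarrow> exp (- \<beta> * x) \<le> Ew \<beta> p r q s a"
    using Ep by (metis exp_le_cancel_iff exp_ln)
  finally show ?thesis .
qed

lemma comparison_principle:
  fixes x y :: "'s::finite \<Rightarrow> 'a::finite \<Rightarrow> real"
  assumes mdp: "transient_mdp p r e" and bp: "\<beta> > 0"
    and xsub: "\<And>s a. x s a \<le> Top \<beta> p r x s a"
    and ysup: "\<And>s a. Top \<beta> p r y s a \<le> y s a"
    and xe: "\<And>a. x e a = 0" and ye: "\<And>a. y e a = 0"
  shows "x s0 a0 \<le> y s0 a0"
proof (rule ccontr)
  assume nle: "\<not> x s0 a0 \<le> y s0 a0"
  define f where "f = (\<lambda>(s, a). x s a - y s a)"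
  define d where "d = Max (range f)"
  have dge: "x s a - y s a \<le> d" for s a
    unfolding d_def by (rule Max_ge) (auto simp: f_def intro!: image_eqI[where x="(s,a)"])
  have dpos: "d > 0" using dge[of s0 a0] nle by simp
  have "d \<in> range f" unfolding d_def by (rule Max_in) auto
  then obtain sa where sa: "d = f sa" by blast
  define Aset where "Aset = {(s, a). x s a - y s a = d}"
  have saA: "sa \<in> Aset" using sa by (auto simp: Aset_def f_def split: prod.splits)
  have mxe: "Max (range (x e)) = 0" "Max (range (y e)) = 0"
    using xe ye by (auto intro: Max_range_const0)
  have key: "s \<noteq> e \<and> (\<forall>s'. p s a s' > 0 \<longrightarrow> s' \<noteq> e \<and> (\<exists>a'. (s', a') \<in> Aset))"
    if A: "(s, a) \<in> Aset" for s a
  proof -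
    have xd: "x s a = y s a + d" using A by (simp add: Aset_def)
    have se: "s \<noteq> e" using xd xe ye dpos by auto
    have mxs: "Max (range (x s')) \<le> Max (range (y s')) + d" for s'
    proof (rule Max_range_le_shift)
      fix a show "x s' a \<le> y s' a + d" using dge[of s' a] by linarith
    qed
    define tx where "tx s' = p s a s' * exp (- \<beta> * (r s a s' + Max (range (x s'))))" for s'
    define ty where "ty s' = p s a s' * exp (- \<beta> * (r s a s' + Max (range (y s'))))" for s'
    have t_ge: "exp (- \<beta> * d) * ty s' \<le> tx s'" for s'
    proof -
      have "- \<beta> * d + - \<beta> * (r s a s' + Max (range (y s'))) \<le> - \<beta> * (r s a s' + Max (range (x s')))"
      proof -
        have h: "\<beta> * Max (range (x s')) \<le> \<beta> * (Max (range (y s')) + d)"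
          using mult_left_mono[OF mxs[of s'], of \<beta>] bp by simp
        show ?thesis using h by (simp add: algebra_simps)
      qed
      then have "exp (- \<beta> * d) * exp (- \<beta> * (r s a s' + Max (range (y s')))) \<le> exp (- \<beta> * (r s a s' + Max (range (x s'))))"
        by (simp add: exp_add[symmetric])
      then show ?thesis unfolding tx_def ty_def using mdp_nonneg[OF mdp, of s a s']
        by (simp add: mult.left_commute mult_left_mono)
    qed
    have Ex: "Ew \<beta> p r x s a = sum tx UNIV" by (simp add: Ew_def tx_def)
    have Ey: "Ew \<beta> p r y s a = sum ty UNIV" by (simp add: Ew_def ty_def)
    have "Ew \<beta> p r x s a \<le> exp (- \<beta> * x s a)" using xsub[of s a] sub_Top_iff[OF mdp bp] by blast
    also have "\<dots> = exp (- \<beta> * d) * exp (- \<beta> * y s a)" using xd by (simp add: algebra_simps exp_add[symmetric])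
    also have "\<dots> \<le> exp (- \<beta> * d) * Ew \<beta> p r y s a"
      using ysup[of s a] sup_Top_iff[OF mdp bp] by simp
    finally have "sum tx UNIV - exp (- \<beta> * d) * sum ty UNIV \<le> 0" using Ex Ey by simp
    then have "(\<Sum>s'\<in>UNIV. tx s' - exp (- \<beta> * d) * ty s') \<le> 0"
      by (simp add: sum_subtractf sum_distrib_left)
    moreover have "\<forall>s'\<in>UNIV. 0 \<le> tx s' - exp (- \<beta> * d) * ty s'" using t_ge by simp
    ultimately have "(\<Sum>s'\<in>UNIV. tx s' - exp (- \<beta> * d) * ty s') = 0"
      by (meson order.antisym sum_nonneg)
    then have zero: "\<forall>s'\<in>UNIV. tx s' - exp (- \<beta> * d) * ty s' = 0"
      using t_ge by (subst (asm) sum_nonneg_eq_0_iff) auto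
    have "s' \<noteq> e \<and> (\<exists>a'. (s', a') \<in> Aset)" if ps: "p s a s' > 0" for s'
    proof -
      have z1: "tx s' = exp (- \<beta> * d) * ty s'" using zero by simp
      then have "p s a s' * exp (- \<beta> * (r s a s' + Max (range (x s')))) = p s a s' * (exp (- \<beta> * d) * exp (- \<beta> * (r s a s' + Max (range (y s')))))"
        unfolding tx_def ty_def by (simp add: ac_simps)
      then have "exp (- \<beta> * (r s a s' + Max (range (x s')))) = exp (- \<beta> * d) * exp (- \<beta> * (r s a s' + Max (range (y s'))))"
        using ps by simp
      then have "exp (- \<beta> * (r s a s' + Max (range (x s')))) = exp (- \<beta> * d + - \<beta> * (r s a s' + Max (range (y s'))))"
        by (simp only: exp_add)
      then have "- \<beta> * (r s a s' + Max (range (x s'))) = - \<beta> * d + - \<beta> * (r s a s' + Max (range (y s')))"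
        by (simp only: exp_inj_iff)
      then have "\<beta> * Max (range (x s')) = \<beta> * (Max (range (y s')) + d)" by (simp add: algebra_simps)
      then have meq: "Max (range (x s')) = Max (range (y s')) + d" using bp by simp
      have ne: "s' \<noteq> e" using meq mxe dpos by auto
      obtain a' where a': "Max (range (x s')) = x s' a'" using Max_range_in[of x s'] by blast
      have "x s' a' - y s' a' = d"
        using meq a' Max_range_ge[of y s' a'] dge[of s' a'] by linarith
      then show ?thesis using ne by (auto simp: Aset_def)
    qed
    with se show ?thesis by blast
  qed
  define Good where "Good = {s. \<exists>a. (s, a) \<in> Aset}"
  define \<pi> where "\<pi> s = (SOME a. (s, a) \<in> Aset)" for s
  have piA: "(s, \<pi> s) \<in> Aset" if "s \<in> Good" for s
    using that unfolding Good_def \<pi>_def by (auto intro: someI)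
  obtain s1 a1 where s1: "(s1, a1) \<in> Aset" using saA by (cases sa) auto
  then have s1G: "s1 \<in> Good" by (auto simp: Good_def)
  have stay: "nstep p \<pi> n s1 t = 0" if "t \<notin> Good" for n t
    using that
  proof (induction n arbitrary: t)
    case 0 then show ?case using s1G by auto
  next
    case (Suc n)
    have "nstep p \<pi> n s1 u * p u (\<pi> u) t = 0" for u
    proof (cases "u \<in> Good")
      case True
      have "\<not> p u (\<pi> u) t > 0" using key[OF piA[OF True]] Suc.prems by (auto simp: Good_def)
      then have "p u (\<pi> u) t = 0" using mdp_nonneg[OF mdp, of u "\<pi> u" t] by simp
      then show ?thesis by simp
    next
      case False then show ?thesis using Suc.IH by simp
    qed
    then show ?case unfolding nstep.simps by (intro sum.neutral) blast
  qed
  have "e \<notin> Good" using key by (auto simp: Good_def)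
  then have "(\<lambda>n. nstep p \<pi> n s1 e) = (\<lambda>n. 0)" using stay by auto
  moreover have "(\<lambda>n. nstep p \<pi> n s1 e) \<longlonglongrightarrow> 1" by (rule mdp_trans[OF mdp])
  ultimately have "(\<lambda>n. 0::real) \<longlonglongrightarrow> 1" by simp
  then show False using LIMSEQ_unique[OF tendsto_const] by fastforce
qed


lemma step_upper:
  fixes D \<eta> h \<beta> :: real
  assumes h: "exp (\<beta> * D) \<le> h" and e0: "0 \<le> \<eta>" and e1: "\<beta> * \<eta> \<le> 1" and bp: "\<beta> > 0"
  shows "D + \<eta> * (1 - h) \<le> (1 - \<beta> * \<eta>) * max D 0"
proof -
  have "\<eta> * (1 - h) \<le> \<eta> * (1 - exp (\<beta> * D))" using h e0 by (simp add: mult_left_mono)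
  also have "\<dots> \<le> \<eta> * (- (\<beta> * D))"
  proof -
    have "1 - exp (\<beta> * D) \<le> - (\<beta> * D)" using exp_ge_add_one_self[of "\<beta> * D"] by linarith
    then show ?thesis using e0 by (intro mult_left_mono) auto
  qed
  finally have "D + \<eta> * (1 - h) \<le> (1 - \<beta> * \<eta>) * D" by (simp add: algebra_simps)
  also have "\<dots> \<le> (1 - \<beta> * \<eta>) * max D 0" using e1 by (intro mult_left_mono) auto
  finally show ?thesis .
qed

lemma step_lower:
  fixes Y \<eta> h \<beta> B :: real
  assumes h: "h \<le> exp (- \<beta> * Y)" and e0: "0 \<le> \<eta>" and bp: "\<beta> > 0"
    and YB: "\<bar>Y\<bar> \<le> B" and e1: "\<eta> * \<beta> * exp (\<beta> * B) \<le> 1"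
  shows "Y - \<eta> * (1 - h) \<le> (1 - \<beta> * exp (- \<beta> * B) * \<eta>) * max Y 0"
proof -
  have "Y - \<eta> * (1 - h) \<le> Y + \<eta> * (exp (- \<beta> * Y) - 1)"
    using h e0 by (simp add: algebra_simps mult_left_mono)
  also have "\<dots> \<le> (1 - \<beta> * exp (- \<beta> * B) * \<eta>) * max Y 0"
  proof (cases "Y \<ge> 0")
    case True
    have "exp (\<beta> * Y) - 1 \<ge> \<beta> * Y" using exp_ge_add_one_self[of "\<beta> * Y"] by linarith
    then have "exp (- \<beta> * Y) * (exp (\<beta> * Y) - 1) \<ge> exp (- \<beta> * Y) * (\<beta> * Y)"
      by (intro mult_left_mono) auto
    then have "1 - exp (- \<beta> * Y) \<ge> exp (- \<beta> * Y) * (\<beta> * Y)"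
      by (simp add: algebra_simps exp_add[symmetric])
    moreover have "exp (- \<beta> * B) * (\<beta> * Y) \<le> exp (- \<beta> * Y) * (\<beta> * Y)"
      using True YB bp by (intro mult_right_mono) auto
    ultimately have "exp (- \<beta> * Y) - 1 \<le> - (\<beta> * exp (- \<beta> * B) * Y)" by (simp add: algebra_simps)
    then have "\<eta> * (exp (- \<beta> * Y) - 1) \<le> \<eta> * (- (\<beta> * exp (- \<beta> * B) * Y))"
      using e0 by (intro mult_left_mono) auto
    then show ?thesis using True by (simp add: algebra_simps)
  next
    case False
    define t where "t = - \<beta> * Y"
    have t0: "t > 0" using False bp by (simp add: t_def mult_pos_neg)
    have "exp (- t) \<ge> 1 - t" using exp_ge_add_one_self[of "- t"] by linarith
    then have "exp t * exp (- t) \<ge> exp t * (1 - t)" by (intro mult_left_mono) auto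
    then have "exp t - 1 \<le> t * exp t" by (simp add: algebra_simps exp_add[symmetric])
    also have "\<dots> \<le> t * exp (\<beta> * B)"
    proof -
      have "\<beta> * (- Y) \<le> \<beta> * B" using YB bp by (intro mult_left_mono) auto
      then have "t \<le> \<beta> * B" by (simp add: t_def)
      then show ?thesis using t0 by (intro mult_left_mono) auto
    qed
    finally have "\<eta> * (exp t - 1) \<le> \<eta> * (t * exp (\<beta> * B))" using e0 by (intro mult_left_mono) auto
    also have "\<dots> = (\<eta> * \<beta> * exp (\<beta> * B)) * (- Y)" by (simp add: t_def algebra_simps)
    also have "\<dots> \<le> 1 * (- Y)" using e1 False by (intro mult_right_mono) auto
    finally have "Y + \<eta> * (exp (- \<beta> * Y) - 1) \<le> 0" by (simp add: t_def)
    then show ?thesis using False by simp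
  qed
  finally show ?thesis .
qed

lemma Ew_shift_ge:
  fixes p :: "'s::finite \<Rightarrow> 'a::finite \<Rightarrow> 's \<Rightarrow> real" and q U :: "'s \<Rightarrow> 'a \<Rightarrow> real"
  assumes mdp: "transient_mdp p r e" and bp: "\<beta> > 0"
    and le: "\<And>s a. q s a \<le> U s a + c"
  shows "exp (- \<beta> * c) * Ew \<beta> p r U s a \<le> Ew \<beta> p r q s a"
  unfolding Ew_def sum_distrib_left
proof (intro sum_mono)
  fix s' :: 's
  have "Max (range (q s')) \<le> Max (range (U s')) + c" by (rule Max_range_le_shift) (rule le)
  then have "\<beta> * Max (range (q s')) \<le> \<beta> * (Max (range (U s')) + c)" using bp by simp
  then have "exp (- \<beta> * c) * exp (- \<beta> * (r s a s' + Max (range (U s')))) \<le> exp (- \<beta> * (r s a s' + Max (range (q s'))))"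
    by (simp add: exp_add[symmetric] algebra_simps)
  then show "exp (- \<beta> * c) * (p s a s' * exp (- \<beta> * (r s a s' + Max (range (U s'))))) \<le> p s a s' * exp (- \<beta> * (r s a s' + Max (range (q s'))))"
    using mdp_nonneg[OF mdp, of s a s'] by (simp add: mult.left_commute mult_left_mono)
qed

lemma Ew_shift_le:
  fixes p :: "'s::finite \<Rightarrow> 'a::finite \<Rightarrow> 's \<Rightarrow> real" and q U :: "'s \<Rightarrow> 'a \<Rightarrow> real"
  assumes mdp: "transient_mdp p r e" and bp: "\<beta> > 0"
    and le: "\<And>s a. U s a - c \<le> q s a"
  shows "Ew \<beta> p r q s a \<le> exp (\<beta> * c) * Ew \<beta> p r U s a"
proof -
  have "exp (- \<beta> * c) * Ew \<beta> p r q s a \<le> Ew \<beta> p r U s a"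
  proof (rule Ew_shift_ge[OF mdp bp])
    fix s a show "U s a \<le> q s a + c" using le[of s a] by linarith
  qed
  then have "exp (\<beta> * c) * (exp (- \<beta> * c) * Ew \<beta> p r q s a) \<le> exp (\<beta> * c) * Ew \<beta> p r U s a"
    by (simp add: mult_left_mono)
  then show ?thesis by (simp add: mult.assoc[symmetric] exp_add[symmetric])
qed

lemma exp_Top: "transient_mdp p r e \<Longrightarrow> \<beta> > 0 \<Longrightarrow> exp (- \<beta> * Top \<beta> p r U s a) = Ew \<beta> p r U s a"
  using Ew_pos[of p r e \<beta> U s a] by (simp add: Top_def)

locale det =
  fixes p :: "'s::finite \<Rightarrow> 'a::finite \<Rightarrow> 's \<Rightarrow> real" and r :: "'s \<Rightarrow> 'a \<Rightarrow> 's \<Rightarrow> real"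
    and e :: 's and \<beta> zmin zmax :: real
    and q :: "nat \<Rightarrow> 's \<Rightarrow> 'a \<Rightarrow> real" and \<eta> :: "nat \<Rightarrow> real"
    and S :: "nat \<Rightarrow> 's" and A :: "nat \<Rightarrow> 'a" and S' :: "nat \<Rightarrow> 's" and z :: "nat \<Rightarrow> real"
  assumes mdp: "transient_mdp p r e" and bp: "\<beta> > 0"
    and q0: "\<And>s a. q 0 s a = 0"
    and z_eq: "\<And>i. z i = r (S i) (A i) (S' i) + Max (range (q i (S' i))) - q i (S i) (A i)"
    and qS: "\<And>i s a. q (Suc i) s a = (if (s, a) = (S i, A i) then q i s a - \<eta> i * (exp (- \<beta> * z i) - 1) else q i s a)"
    and eta_nn: "\<And>i. 0 \<le> \<eta> i"
    and G1: "\<And>i s'. 0 < p (S i) (A i) s' \<Longrightarrow> r (S i) (A i) s' + Max (range (q i s')) - q i (S i) (A i) \<in> {zmin..zmax}"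
    and G2: "\<And>i. 0 < p (S i) (A i) (S' i)"
    and divg: "\<And>s a. \<not> summable (\<lambda>i. if (S i, A i) = (s, a) then \<eta> i else 0)"
    and small: "\<And>s a. (\<lambda>i. if (S i, A i) = (s, a) then \<eta> i else 0) \<longlonglongrightarrow> 0"
    and noise: "\<And>s a. summable (\<lambda>i. if (S i, A i) = (s, a) then \<eta> i * (exp (\<beta> * q i (S i) (A i)) * Ew \<beta> p r (q i) (S i) (A i) - exp (- \<beta> * z i)) else 0)"
begin

lemma sink0: "q i e a = 0"
proof (induction i arbitrary: a)
  case 0 then show ?case by (simp add: q0)
next
  case (Suc i)
  show ?case
  proof (cases "(e, a) = (S i, A i)")
    case True
    then have Se: "S i = e" "A i = a" by auto
    have "S' i = e"
    proof (rule ccontr)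
      assume "S' i \<noteq> e"
      then have "p e (A i) (S' i) = 0" by (rule mdp_sink_only[OF mdp])
      with G2[of i] Se show False by simp
    qed
    moreover have "Max (range (q i e)) = 0" by (rule Max_range_const0) (rule Suc.IH)
    ultimately have z0: "z i = 0" using z_eq[of i] Se Suc.IH mdp_sink[OF mdp] by simp
    have "q (Suc i) e a = q i e a - \<eta> i * (exp (- \<beta> * z i) - 1)" using qS[of i e a] True by simp
    then show ?thesis using z0 Suc.IH by simp
  next
    case False
    show ?thesis by (simp only: qS if_not_P[OF False] Suc.IH)
  qed
qed

lemma z_range: "z i \<in> {zmin..zmax}"
  using G1[OF G2[of i]] z_eq[of i] by simp

definition cc :: "'s \<Rightarrow> 'a \<Rightarrow> nat \<Rightarrow> real" where
  "cc s a i = (if (S i, A i) = (s, a) then \<eta> i else 0)"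

definition hh :: "nat \<Rightarrow> real" where
  "hh i = exp (\<beta> * q i (S i) (A i)) * Ew \<beta> p r (q i) (S i) (A i)"

definition eps :: "nat \<Rightarrow> real" where
  "eps i = hh i - exp (- \<beta> * z i)"

lemma cc_nn: "0 \<le> cc s a i" by (simp add: cc_def eta_nn)
lemma abs_cc[simp]: "\<bar>cc s a i\<bar> = cc s a i" using cc_nn by simp
lemma cc_lim: "cc s a \<longlonglongrightarrow> 0" using small[of s a] by (simp add: cc_def[abs_def])
lemma cc_div: "\<not> summable (cc s a)" using divg[of s a] by (simp add: cc_def[abs_def])
lemma noise_cc: "summable (\<lambda>i. cc s a i * eps i)"
proof -
  have "(\<lambda>i. cc s a i * eps i) = (\<lambda>i. if (S i, A i) = (s, a) then \<eta> i * (exp (\<beta> * q i (S i) (A i)) * Ew \<beta> p r (q i) (S i) (A i) - exp (- \<beta> * z i)) else 0)"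
    by (auto simp: cc_def eps_def hh_def fun_eq_iff)
  then show ?thesis using noise[of s a] by simp
qed

lemma q_step: "q (Suc i) s a = q i s a + cc s a i * (1 - hh i) + cc s a i * eps i"
  by (simp add: qS cc_def eps_def algebra_simps)

lemma scaled_props:
  assumes k: "k > 0"
  shows "\<And>i. 0 \<le> k * cc s a i" "(\<lambda>i. k * cc s a i) \<longlonglongrightarrow> 0" "\<not> summable (\<lambda>i. k * cc s a i)"
proof -
  show "\<And>i. 0 \<le> k * cc s a i" using k cc_nn by simp
  show "(\<lambda>i. k * cc s a i) \<longlonglongrightarrow> 0" using tendsto_mult_right_zero[OF cc_lim] by simp
  show "\<not> summable (\<lambda>i. k * cc s a i)"
  proof
    assume "summable (\<lambda>i. k * cc s a i)"
    then have "summable (\<lambda>i. (1/k) * (k * cc s a i))" by (rule summable_mult)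
    then show False using k cc_div[of s a] by simp
  qed
qed

lemma cc_ev_small:
  assumes k: "k > 0"
  shows "eventually (\<lambda>i. cc s a i * k \<le> 1) sequentially"
proof -
  have "eventually (\<lambda>i. \<bar>cc s a i\<bar> \<le> 1 / k) sequentially"
    using k by (intro tendsto0_ev cc_lim) simp
  then show ?thesis
    by eventually_elim (use k in \<open>auto simp: field_simps\<close>)
qed

lemma cmp_upper:
  assumes ev: "eventually (\<lambda>i. \<forall>s a. q i s a \<le> U s a + c0) sequentially" and dp: "\<delta> > 0"
  shows "eventually (\<lambda>i. q i s a \<le> Top \<beta> p r U s a + c0 + \<delta>) sequentially"
proof -
  define V where "V = Top \<beta> p r U s a + c0"
  define D where "D i = q i s a - V" for i
  have "eventually (\<lambda>i. D i \<le> \<delta>) sequentially"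
  proof (rule limsup_compare[where a="\<lambda>i. \<beta> * cc s a i" and b="\<lambda>i. cc s a i * eps i"])
    show "\<And>i. 0 \<le> \<beta> * cc s a i" "(\<lambda>i. \<beta> * cc s a i) \<longlonglongrightarrow> 0" "\<not> summable (\<lambda>i. \<beta> * cc s a i)"
      using scaled_props[OF bp] by auto
    show "summable (\<lambda>i. cc s a i * eps i)" by (rule noise_cc)
    show "\<delta> > 0" by (rule dp)
    show "eventually (\<lambda>i. D (Suc i) \<le> (1 - \<beta> * cc s a i) * max (D i) 0 + cc s a i * eps i) sequentially"
      using ev cc_ev_small[OF bp, of s a]
    proof eventually_elim
      case (elim i)
      show ?case
      proof (cases "(S i, A i) = (s, a)")
        case True
        then have Si: "S i = s" "A i = a" by auto
        have "exp (- \<beta> * c0) * Ew \<beta> p r U s a \<le> Ew \<beta> p r (q i) s a"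
          by (rule Ew_shift_ge[OF mdp bp]) (use elim in auto)
        then have "exp (\<beta> * q i s a) * (exp (- \<beta> * c0) * Ew \<beta> p r U s a) \<le> hh i"
          unfolding hh_def Si by (intro mult_left_mono) auto
        moreover have "exp (\<beta> * D i) = exp (\<beta> * q i s a) * (exp (- \<beta> * c0) * Ew \<beta> p r U s a)"
          unfolding exp_Top[OF mdp bp, symmetric]
          by (simp add: D_def V_def exp_add[symmetric] algebra_simps)
        ultimately have h: "exp (\<beta> * D i) \<le> hh i" by simp
        have "D (Suc i) = D i + cc s a i * (1 - hh i) + cc s a i * eps i"
          by (simp add: D_def q_step)
        also have "\<dots> \<le> (1 - \<beta> * cc s a i) * max (D i) 0 + cc s a i * eps i"
        proof -
          have e1: "\<beta> * cc s a i \<le> 1" using elim by (simp add: mult.commute)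
          show ?thesis using step_upper[OF h cc_nn e1 bp] by simp
        qed
        finally show ?thesis .
      next
        case False
        then have "cc s a i = 0" by (simp only: cc_def if_not_P[OF False] if_False)
        moreover have "D (Suc i) = D i"
        proof -
          have F2: "(s, a) \<noteq> (S i, A i)" using False by auto
          show ?thesis by (simp only: D_def qS if_not_P[OF F2])
        qed
        ultimately show ?thesis by simp
      qed
    qed
  qed
  then show ?thesis by eventually_elim (simp add: D_def V_def)
qed

lemma cmp_lower:
  assumes ev: "eventually (\<lambda>i. \<forall>s a. U s a - c0 \<le> q i s a) sequentially" and dp: "\<delta> > 0"
    and bnd: "\<And>i. \<bar>q i s a\<bar> \<le> B"
  shows "eventually (\<lambda>i. Top \<beta> p r U s a - c0 - \<delta> \<le> q i s a) sequentially"
proof -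
  define V where "V = Top \<beta> p r U s a - c0"
  define Y where "Y i = V - q i s a" for i
  define B' where "B' = \<bar>V\<bar> + B"
  have YB: "\<bar>Y i\<bar> \<le> B'" for i using bnd[of i] by (simp add: Y_def B'_def)
  define k where "k = \<beta> * exp (- \<beta> * B')"
  have kp: "k > 0" using bp by (simp add: k_def)
  have kk: "\<beta> * exp (\<beta> * B') > 0" using bp by simp
  have "eventually (\<lambda>i. Y i \<le> \<delta>) sequentially"
  proof (rule limsup_compare[where a="\<lambda>i. k * cc s a i" and b="\<lambda>i. - (cc s a i * eps i)"])
    show "\<And>i. 0 \<le> k * cc s a i" "(\<lambda>i. k * cc s a i) \<longlonglongrightarrow> 0" "\<not> summable (\<lambda>i. k * cc s a i)"
      using scaled_props[OF kp] by auto
    show "summable (\<lambda>i. - (cc s a i * eps i))" using summable_minus[OF noise_cc] .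
    show "\<delta> > 0" by (rule dp)
    show "eventually (\<lambda>i. Y (Suc i) \<le> (1 - k * cc s a i) * max (Y i) 0 + - (cc s a i * eps i)) sequentially"
      using ev cc_ev_small[OF kk, of s a]
    proof eventually_elim
      case (elim i)
      show ?case
      proof (cases "(S i, A i) = (s, a)")
        case True
        then have Si: "S i = s" "A i = a" by auto
        have "Ew \<beta> p r (q i) s a \<le> exp (\<beta> * c0) * Ew \<beta> p r U s a"
          by (rule Ew_shift_le[OF mdp bp]) (use elim in auto)
        then have "hh i \<le> exp (\<beta> * q i s a) * (exp (\<beta> * c0) * Ew \<beta> p r U s a)"
          unfolding hh_def Si by (intro mult_left_mono) auto
        moreover have "exp (- \<beta> * Y i) = exp (\<beta> * q i s a) * (exp (\<beta> * c0) * Ew \<beta> p r U s a)"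
          unfolding exp_Top[OF mdp bp, symmetric]
          by (simp add: Y_def V_def exp_add[symmetric] algebra_simps)
        ultimately have h: "hh i \<le> exp (- \<beta> * Y i)" by simp
        have "Y (Suc i) = Y i - cc s a i * (1 - hh i) + - (cc s a i * eps i)"
          by (simp add: Y_def q_step)
        also have "\<dots> \<le> (1 - k * cc s a i) * max (Y i) 0 + - (cc s a i * eps i)"
        proof -
          have e1: "cc s a i * \<beta> * exp (\<beta> * B') \<le> 1" using elim by (simp add: mult.assoc)
          show ?thesis using step_lower[OF h cc_nn bp YB e1] by (simp add: k_def mult_ac)
        qed
        finally show ?thesis .
      next
        case False
        then have "cc s a i = 0" by (simp only: cc_def if_not_P[OF False] if_False)
        moreover have "Y (Suc i) = Y i"
        proof -
          have F2: "(s, a) \<noteq> (S i, A i)" using False by auto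
          show ?thesis by (simp only: Y_def qS if_not_P[OF F2])
        qed
        ultimately show ?thesis by simp
      qed
    qed
  qed
  then show ?thesis by eventually_elim (simp add: Y_def V_def)
qed

end


primrec rk :: "('s::finite \<Rightarrow> 'a::finite \<Rightarrow> 's \<Rightarrow> real) \<Rightarrow> 's \<Rightarrow> nat \<Rightarrow> 's set" where
  "rk p e 0 = {e}"
| "rk p e (Suc k) = rk p e k \<union> {s. \<forall>a. \<exists>s'\<in>rk p e k. 0 < p s a s'}"

lemma e_in_rk: "e \<in> rk p e k"
  by (induction k) auto

lemma trap_false:
  assumes mdp: "transient_mdp p r e" and s0: "s0 \<in> G" and eG: "e \<notin> G"
    and cl: "\<And>s t. s \<in> G \<Longrightarrow> 0 < p s (\<pi> s) t \<Longrightarrow> t \<in> G"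
  shows False
proof -
  have stay: "nstep p \<pi> n s0 t = 0" if "t \<notin> G" for n t
    using that
  proof (induction n arbitrary: t)
    case 0 then show ?case using s0 by auto
  next
    case (Suc n)
    have "nstep p \<pi> n s0 u * p u (\<pi> u) t = 0" for u
    proof (cases "u \<in> G")
      case True
      have "\<not> p u (\<pi> u) t > 0" using cl[OF True] Suc.prems by auto
      then have "p u (\<pi> u) t = 0" using mdp_nonneg[OF mdp, of u "\<pi> u" t] by simp
      then show ?thesis by simp
    next
      case False then show ?thesis using Suc.IH by simp
    qed
    then show ?case unfolding nstep.simps by (intro sum.neutral) blast
  qed
  then have "(\<lambda>n. nstep p \<pi> n s0 e) = (\<lambda>n. 0)" using eG by auto
  moreover have "(\<lambda>n. nstep p \<pi> n s0 e) \<longlonglongrightarrow> 1" by (rule mdp_trans[OF mdp])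
  ultimately have "(\<lambda>n. 0::real) \<longlonglongrightarrow> 1" by simp
  then show False using LIMSEQ_unique[OF tendsto_const] by fastforce
qed

lemma rk_all:
  fixes p :: "'s::finite \<Rightarrow> 'a::finite \<Rightarrow> 's \<Rightarrow> real"
  assumes mdp: "transient_mdp p r e"
  shows "\<exists>k. rk p e k = UNIV"
proof (rule ccontr)
  assume nall: "\<not> (\<exists>k. rk p e k = UNIV)"
  have strict: "rk p e k \<subset> rk p e (Suc k)" for k
  proof -
    have sub: "rk p e k \<subseteq> rk p e (Suc k)" by auto
    show ?thesis
    proof (rule ccontr)
      assume "\<not> rk p e k \<subset> rk p e (Suc k)"
      then have eq: "rk p e (Suc k) = rk p e k" using sub by blast
      define G where "G = UNIV - rk p e k"
      obtain s0 where s0: "s0 \<in> G" using nall unfolding G_def by blast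
      have ex: "\<exists>a. \<forall>s'\<in>rk p e k. \<not> 0 < p s a s'" if "s \<in> G" for s
      proof -
        have "s \<notin> rk p e (Suc k)" using that eq by (simp add: G_def)
        then show ?thesis by auto
      qed
      define \<pi> where "\<pi> s = (SOME a. \<forall>s'\<in>rk p e k. \<not> 0 < p s a s')" for s
      have pi: "\<forall>s'\<in>rk p e k. \<not> 0 < p s (\<pi> s) s'" if "s \<in> G" for s
        unfolding \<pi>_def using someI_ex[OF ex[OF that]] .
      show False
      proof (rule trap_false[OF mdp s0])
        show "e \<notin> G" by (simp add: G_def e_in_rk)
        fix s t assume "s \<in> G" "0 < p s (\<pi> s) t"
        then show "t \<in> G" using pi by (auto simp: G_def)
      qed
    qed
  qed
  have ck: "k + 1 \<le> card (rk p e k)" for k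
  proof (induction k)
    case 0 then show ?case by simp
  next
    case (Suc k)
    have "card (rk p e k) < card (rk p e (Suc k))"
      by (rule psubset_card_mono[OF finite strict])
    then show ?case using Suc.IH by simp
  qed
  have cu: "card (rk p e k) \<le> card (UNIV :: 's set)" for k
    by (rule card_mono) auto
  show False using ck[of "card (UNIV :: 's set)"] cu[of "card (UNIV :: 's set)"] by linarith
qed

lemma finite_max_bound:
  fixes f :: "'x::finite \<Rightarrow> nat \<Rightarrow> real"
  assumes "\<And>x. \<exists>B. \<forall>i. f x i \<le> B"
  shows "\<exists>B. \<forall>x i. f x i \<le> B"
proof -
  have "\<forall>x. \<exists>B. \<forall>i. f x i \<le> B" using assms by blast
  then obtain Bf where Bf: "\<forall>x. \<forall>i. f x i \<le> Bf x" by (rule choice[THEN exE])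
  have "f x i \<le> Max (range Bf)" for x i
  proof -
    have "f x i \<le> Bf x" using Bf by blast
    also have "Bf x \<le> Max (range Bf)" by (rule Max_ge) auto
    finally show ?thesis .
  qed
  then show ?thesis by blast
qed

context det begin

lemma visit_bound:
  assumes K: "\<And>i. (S i, A i) = (s, a) \<Longrightarrow> \<bar>q i s a\<bar> \<le> K"
  shows "\<exists>B. \<forall>i. \<bar>q i s a\<bar> \<le> B"
proof -
  have "Bseq (cc s a)" using cc_lim by (rule convergent_imp_Bseq[OF convergentI])
  then obtain H where H0': "\<forall>i. norm (cc s a i) \<le> H" unfolding Bseq_def by blast
  have H: "cc s a i \<le> H" for i using H0' by auto
  define Cz where "Cz = exp (\<beta> * \<bar>zmin\<bar>) + 1"
  have H0: "0 \<le> H" using H[of 0] cc_nn[of s a 0] by linarith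
  have zb: "\<bar>exp (- \<beta> * z i) - 1\<bar> \<le> Cz" for i
  proof -
    have "z i \<ge> zmin" using z_range[of i] by simp
    then have "- z i \<le> \<bar>zmin\<bar>" by linarith
    then have "\<beta> * (- z i) \<le> \<beta> * \<bar>zmin\<bar>" using bp by (intro mult_left_mono) auto
    then have "- \<beta> * z i \<le> \<beta> * \<bar>zmin\<bar>" by simp
    then have e1: "exp (- \<beta> * z i) \<le> exp (\<beta> * \<bar>zmin\<bar>)" by simp
    have e2: "0 < exp (- \<beta> * z i)" by simp
    show ?thesis using e1 e2 unfolding Cz_def abs_le_iff by (intro conjI; linarith)
  qed
  have "\<bar>q i s a\<bar> \<le> \<bar>K\<bar> + H * Cz" for i
  proof (induction i)
    case 0 then show ?case using H0 by (simp add: q0 Cz_def)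
  next
    case (Suc i)
    show ?case
    proof (cases "(s, a) = (S i, A i)")
      case True
      have qs: "q (Suc i) s a = q i s a - \<eta> i * (exp (- \<beta> * z i) - 1)" using qS[of i s a] True by simp
      have "\<eta> i = cc s a i" using True by (simp add: cc_def)
      then have "\<eta> i \<le> H" using H[of i] by simp
      have "\<bar>\<eta> i * (exp (- \<beta> * z i) - 1)\<bar> \<le> H * Cz"
        unfolding abs_mult using \<open>\<eta> i \<le> H\<close> eta_nn[of i] zb[of i] H0
        by (intro mult_mono) auto
      moreover have "\<bar>q i s a\<bar> \<le> \<bar>K\<bar>" using K[of i] True by force
      ultimately show ?thesis unfolding qs by linarith
    next
      case False
      have "q (Suc i) s a = q i s a" by (simp only: qS if_not_P[OF False])
      then show ?thesis using Suc.IH by simp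
    qed
  qed
  then show ?thesis by blast
qed

lemma rank_bound: "\<exists>B. \<forall>s\<in>rk p e k. \<forall>i a. \<bar>q i s a\<bar> \<le> B"
proof (induction k)
  case 0 then show ?case using sink0 by auto
next
  case (Suc k)
  then obtain Bk where Bk: "\<And>s i a. s \<in> rk p e k \<Longrightarrow> \<bar>q i s a\<bar> \<le> Bk" by blast
  define R where "R = Max (range (\<lambda>(s, a, s'). \<bar>r s a s'\<bar>))"
  have R: "\<bar>r s a s'\<bar> \<le> R" for s a s'
    unfolding R_def by (rule Max_ge) (auto intro!: image_eqI[where x="(s, a, s')"])
  define K where "K = R + Bk + \<bar>zmin\<bar> + \<bar>zmax\<bar>"
  have pair: "\<exists>B. \<forall>i. (if s \<in> rk p e (Suc k) then \<bar>q i s a\<bar> else 0) \<le> B" for s a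
  proof (cases "s \<in> rk p e k")
    case True then show ?thesis using Bk by auto
  next
    case notk: False
    show ?thesis
    proof (cases "s \<in> rk p e (Suc k)")
      case False then show ?thesis by auto
    next
      case True
      then obtain s' where s': "s' \<in> rk p e k" "0 < p s a s'" using notk by auto
      have "\<bar>q i s a\<bar> \<le> K" if vis: "(S i, A i) = (s, a)" for i
      proof -
        have zz: "r s a s' + Max (range (q i s')) - q i s a \<in> {zmin..zmax}"
          using G1[of i s'] vis s'(2) by auto
        then have z1: "zmin \<le> r s a s' + Max (range (q i s')) - q i s a"
          and z2: "r s a s' + Max (range (q i s')) - q i s a \<le> zmax" by auto
        obtain a' where a': "Max (range (q i s')) = q i s' a'" using Max_range_in[of "q i" s'] by blast
        have M1: "Max (range (q i s')) \<le> Bk" using Bk[OF s'(1), of i a'] a' by (simp add: abs_le_iff)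
        have M2: "- Bk \<le> Max (range (q i s'))"
        proof -
          have "- Bk \<le> q i s' a" using Bk[OF s'(1), of i a] by (simp add: abs_le_iff)
          moreover have "q i s' a \<le> Max (range (q i s'))" by (rule Max_range_ge)
          ultimately show ?thesis by linarith
        qed
        have r1: "r s a s' \<le> R" "- R \<le> r s a s'" using R[of s a s'] by (simp_all add: abs_le_iff)
        have zm: "- \<bar>zmin\<bar> \<le> zmin" "zmax \<le> \<bar>zmax\<bar>" by simp_all
        have zm2: "0 \<le> \<bar>zmin\<bar>" "0 \<le> \<bar>zmax\<bar>" by simp_all
        have u: "q i s a \<le> K" unfolding K_def using z1 M1 r1 zm zm2 by linarith
        have l: "- q i s a \<le> K" unfolding K_def using z2 M2 r1 zm zm2 by linarith
        show ?thesis using u l by (simp add: abs_le_iff)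
      qed
      then obtain B where "\<forall>i. \<bar>q i s a\<bar> \<le> B" using visit_bound by blast
      then show ?thesis using True by auto
    qed
  qed
  have pair': "\<exists>B. \<forall>i. (case x of (s, a) \<Rightarrow> if s \<in> rk p e (Suc k) then \<bar>q i s a\<bar> else 0) \<le> B" for x
    using pair[of "fst x" "snd x"] by (simp add: case_prod_beta)
  obtain B where B: "\<forall>x i. (case x of (s, a) \<Rightarrow> if s \<in> rk p e (Suc k) then \<bar>q i s a\<bar> else 0) \<le> B"
    using finite_max_bound[of "\<lambda>x i. case x of (s, a) \<Rightarrow> if s \<in> rk p e (Suc k) then \<bar>q i s a\<bar> else 0", OF pair'] by blast
  show ?case
  proof (intro exI ballI allI)
    fix s i a assume "s \<in> rk p e (Suc k)"
    moreover have "(case (s, a) of (s, a) \<Rightarrow> if s \<in> rk p e (Suc k) then \<bar>q i s a\<bar> else 0) \<le> B"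
      using B by blast
    ultimately show "\<bar>q i s a\<bar> \<le> B" by simp
  qed
qed

lemma all_bound: "\<exists>B. \<forall>i s a. \<bar>q i s a\<bar> \<le> B"
proof -
  obtain k where "rk p e k = UNIV" using rk_all[OF mdp] by blast
  then show ?thesis using rank_bound[of k] by blast
qed

end


context det begin

lemma ev_all2:
  fixes P :: "nat \<Rightarrow> 's \<Rightarrow> 'a \<Rightarrow> bool"
  assumes "\<And>s a. eventually (\<lambda>i. P i s a) sequentially"
  shows "eventually (\<lambda>i. \<forall>s a. P i s a) sequentially"
proof (rule eventually_all_finite)
  fix s show "eventually (\<lambda>i. \<forall>a. P i s a) sequentially"
    by (rule eventually_all_finite) (rule assms)
qed

theorem det_conv:
  "\<exists>L. (\<forall>s a. L s a = Top \<beta> p r L s a) \<and> (\<forall>a. L e a = 0) \<and> (\<forall>s a. (\<lambda>i. q i s a) \<longlonglongrightarrow> L s a)"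
proof -
  obtain B where B: "\<And>i s a. \<bar>q i s a\<bar> \<le> B" using all_bound by blast
  define ls where "ls s a = limsup (\<lambda>i. ereal (q i s a))" for s a
  define li where "li s a = liminf (\<lambda>i. ereal (q i s a))" for s a
  have Bu: "q i s a \<le> B" "- B \<le> q i s a" for i s a using B[of i s a] by (simp_all add: abs_le_iff)
  have ls_le: "ls s a \<le> ereal B" for s a
    unfolding ls_def by (rule Limsup_bounded) (intro always_eventually allI, simp add: Bu)
  have li_ge: "ereal (- B) \<le> li s a" for s a
    unfolding li_def by (rule Liminf_bounded) (intro always_eventually allI, simp add: Bu)
  have li_ls: "li s a \<le> ls s a" for s a
    unfolding li_def ls_def by (rule Liminf_le_Limsup) simp
  define Qs where "Qs s a = real_of_ereal (ls s a)" for s a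
  define Qi where "Qi s a = real_of_ereal (li s a)" for s a
  have Qs_eq: "ls s a = ereal (Qs s a)" for s a
    using ls_le[of s a] li_ge[of s a] li_ls[of s a] unfolding Qs_def
    by (cases "ls s a") auto
  have Qi_eq: "li s a = ereal (Qi s a)" for s a
    using ls_le[of s a] li_ge[of s a] li_ls[of s a] unfolding Qi_def
    by (cases "li s a") auto
  have sub: "Qs s a \<le> Top \<beta> p r Qs s a" for s a
  proof (rule field_le_epsilon)
    fix \<epsilon> :: real assume ep: "\<epsilon> > 0"
    define \<delta> where "\<delta> = \<epsilon> / 2"
    have dp: "\<delta> > 0" using ep by (simp add: \<delta>_def)
    have "eventually (\<lambda>i. q i s a \<le> Qs s a + \<delta>) sequentially" for s a
    proof -
      have "ls s a < ereal (Qs s a + \<delta>)" using Qs_eq[of s a] dp by simp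
      then have "eventually (\<lambda>i. ereal (q i s a) < ereal (Qs s a + \<delta>)) sequentially"
        unfolding ls_def by (rule Limsup_lessD)
      then show ?thesis by eventually_elim simp
    qed
    then have "eventually (\<lambda>i. \<forall>s a. q i s a \<le> Qs s a + \<delta>) sequentially" by (rule ev_all2)
    then have "eventually (\<lambda>i. q i s a \<le> Top \<beta> p r Qs s a + \<delta> + \<delta>) sequentially"
      by (rule cmp_upper[OF _ dp])
    then have "eventually (\<lambda>i. ereal (q i s a) \<le> ereal (Top \<beta> p r Qs s a + \<delta> + \<delta>)) sequentially"
      by eventually_elim simp
    then have "ls s a \<le> ereal (Top \<beta> p r Qs s a + \<delta> + \<delta>)"
      unfolding ls_def by (rule Limsup_bounded)
    then show "Qs s a \<le> Top \<beta> p r Qs s a + \<epsilon>" using Qs_eq[of s a] by (simp add: \<delta>_def)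
  qed
  have sup: "Top \<beta> p r Qi s a \<le> Qi s a" for s a
  proof -
    have "Top \<beta> p r Qi s a \<le> Qi s a + \<epsilon>" if ep: "\<epsilon> > 0" for \<epsilon>
    proof -
      define \<delta> where "\<delta> = \<epsilon> / 2"
      have dp: "\<delta> > 0" using ep by (simp add: \<delta>_def)
      have "eventually (\<lambda>i. Qi s a - \<delta> \<le> q i s a) sequentially" for s a
      proof -
        have "ereal (Qi s a - \<delta>) < li s a" using Qi_eq[of s a] dp by simp
        then have "eventually (\<lambda>i. ereal (q i s a) > ereal (Qi s a - \<delta>)) sequentially"
          unfolding li_def by (rule less_LiminfD)
        then show ?thesis by eventually_elim simp
      qed
      then have "eventually (\<lambda>i. \<forall>s a. Qi s a - \<delta> \<le> q i s a) sequentially" by (rule ev_all2)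
      then have "eventually (\<lambda>i. Top \<beta> p r Qi s a - \<delta> - \<delta> \<le> q i s a) sequentially"
        by (rule cmp_lower[OF _ dp B])
      then have "eventually (\<lambda>i. ereal (Top \<beta> p r Qi s a - \<delta> - \<delta>) \<le> ereal (q i s a)) sequentially"
        by eventually_elim simp
      then have "ereal (Top \<beta> p r Qi s a - \<delta> - \<delta>) \<le> li s a"
        unfolding li_def by (rule Liminf_bounded)
      then show ?thesis using Qi_eq[of s a] by (simp add: \<delta>_def)
    qed
    then show ?thesis by (rule field_le_epsilon)
  qed
  have sinkQ: "Qs e a = 0" "Qi e a = 0" for a
  proof -
    have "(\<lambda>i. ereal (q i e a)) = (\<lambda>i. 0)" using sink0 by (simp add: zero_ereal_def)
    then have "ls e a = 0" "li e a = 0" unfolding ls_def li_def by (simp_all add: Limsup_const Liminf_const)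
    then show "Qs e a = 0" "Qi e a = 0" by (simp_all add: Qs_def Qi_def)
  qed
  have le1: "Qs s a \<le> Qi s a" for s a
    by (rule comparison_principle[OF mdp bp sub sup]) (simp_all add: sinkQ)
  have le2: "Qi s a \<le> Qs s a" for s a
    using li_ls[of s a] Qs_eq[of s a] Qi_eq[of s a] by simp
  have eqQ: "Qi = Qs" using le1 le2 by (intro ext) (meson order.antisym)
  show ?thesis
  proof (intro exI conjI allI)
    fix s a
    show "Qs s a = Top \<beta> p r Qs s a" using sub[of s a] sup[of s a] eqQ by simp
    show "(\<lambda>i. q i s a) \<longlonglongrightarrow> Qs s a"
    proof (rule limsup_le_liminf_real)
      show "limsup (\<lambda>i. q i s a) \<le> ereal (Qs s a)" using Qs_eq[of s a] by (simp add: ls_def)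
      show "ereal (Qs s a) \<le> liminf (\<lambda>i. q i s a)" using Qi_eq[of s a] eqQ by (simp add: li_def)
    qed
  next
    fix a show "Qs e a = 0" by (rule sinkQ)
  qed
qed

end


lemma (in finite_measure) integrable_bdd:
  fixes f :: "'a \<Rightarrow> real"
  assumes "f \<in> borel_measurable M" "\<And>w. w \<in> space M \<Longrightarrow> \<bar>f w\<bar> \<le> B"
  shows "integrable M f"
  by (rule integrable_const_bound[where B=B]) (use assms in auto)

locale mg = prob_space M for M :: "'w measure" +
  fixes F :: "nat \<Rightarrow> 'w measure" and \<xi> :: "nat \<Rightarrow> 'w \<Rightarrow> real" and C :: real
  assumes sub: "\<And>i. subalgebra M (F i)"
    and filt: "\<And>i j. i \<le> j \<Longrightarrow> subalgebra (F j) (F i)"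
    and \<xi>m: "\<And>i. \<xi> i \<in> borel_measurable (F (Suc i))"
    and \<xi>b: "\<And>i w. w \<in> space M \<Longrightarrow> \<bar>\<xi> i w\<bar> \<le> C"
    and mart: "\<And>i g B. g \<in> borel_measurable (F i) \<Longrightarrow> (\<And>w. w \<in> space M \<Longrightarrow> \<bar>g w\<bar> \<le> B) \<Longrightarrow> (\<integral>w. g w * \<xi> i w \<partial>M) = 0"
begin

lemma Fmono: "f \<in> borel_measurable (F i) \<Longrightarrow> i \<le> j \<Longrightarrow> f \<in> borel_measurable (F j)"
  by (rule measurable_from_subalg[OF filt])

lemma FM: "f \<in> borel_measurable (F i) \<Longrightarrow> f \<in> borel_measurable M"
  by (rule measurable_from_subalg[OF sub])

lemma spF: "space (F i) = space M" using sub[of i] by (simp add: subalgebra_def)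

lemma C0: "0 \<le> C" using \<xi>b[of _ 0] by (metis abs_ge_zero order_trans prob_space_axioms prob_space.not_empty ex_in_conv)

lemma psum_meas:
  assumes um: "\<And>i. u i \<in> borel_measurable (F i)"
  shows "(\<lambda>w. \<Sum>i<n. u i w * \<xi> i w) \<in> borel_measurable (F n)"
proof (induction n)
  case 0 then show ?case by simp
next
  case (Suc n)
  have a: "(\<lambda>w. \<Sum>i<n. u i w * \<xi> i w) \<in> borel_measurable (F (Suc n))" by (rule Fmono[OF Suc.IH]) simp
  have b: "u n \<in> borel_measurable (F (Suc n))" by (rule Fmono[OF um]) simp
  have c: "\<xi> n \<in> borel_measurable (F (Suc n))" by (rule \<xi>m)
  show ?case using a b c by simp
qed

lemma psum_bdd:
  assumes ub: "\<And>i w. w \<in> space M \<Longrightarrow> \<bar>u i w\<bar> \<le> U"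
  shows "w \<in> space M \<Longrightarrow> \<bar>\<Sum>i<n. u i w * \<xi> i w\<bar> \<le> real n * (U * C)"
proof (induction n)
  case 0 then show ?case by simp
next
  case (Suc n)
  have "\<bar>u n w * \<xi> n w\<bar> \<le> U * C"
    unfolding abs_mult using ub[OF Suc.prems, of n] \<xi>b[OF Suc.prems, of n] by (intro mult_mono) auto
  then show ?case using Suc by (simp add: algebra_simps)
qed

lemma ortho_sum:
  assumes um: "\<And>i. u i \<in> borel_measurable (F i)"
    and ub: "\<And>i w. w \<in> space M \<Longrightarrow> \<bar>u i w\<bar> \<le> U"
  shows "(\<integral>w. (\<Sum>i<n. u i w * \<xi> i w)\<^sup>2 \<partial>M) = (\<Sum>i<n. \<integral>w. (u i w * \<xi> i w)\<^sup>2 \<partial>M)"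
proof (induction n)
  case 0 then show ?case by simp
next
  case (Suc n)
  define Sn where "Sn w = (\<Sum>i<n. u i w * \<xi> i w)" for w
  have SnF: "Sn \<in> borel_measurable (F n)" unfolding Sn_def[abs_def] by (rule psum_meas[OF um])
  have SnM: "Sn \<in> borel_measurable M" by (rule FM[OF SnF])
  have Snb: "\<bar>Sn w\<bar> \<le> real n * (U * C)" if "w \<in> space M" for w
    unfolding Sn_def by (rule psum_bdd[OF ub that])
  have uM: "u n \<in> borel_measurable M" by (rule FM[OF um])
  have \<xi>M: "\<xi> n \<in> borel_measurable M" by (rule FM[OF \<xi>m])
  have dn_b: "\<bar>u n w * \<xi> n w\<bar> \<le> U * C" if "w \<in> space M" for w
    unfolding abs_mult using ub[OF that, of n] \<xi>b[OF that, of n] by (intro mult_mono) auto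
  have i1: "integrable M (\<lambda>w. (Sn w)\<^sup>2)"
  proof (rule integrable_bdd[where B="(real n * (U * C))\<^sup>2"])
    show "(\<lambda>w. (Sn w)\<^sup>2) \<in> borel_measurable M" using SnM by simp
    fix w assume w: "w \<in> space M"
    have "\<bar>Sn w\<bar>\<^sup>2 \<le> (real n * (U * C))\<^sup>2" by (rule power_mono[OF Snb[OF w] abs_ge_zero])
    then show "\<bar>(Sn w)\<^sup>2\<bar> \<le> (real n * (U * C))\<^sup>2" by simp
  qed
  have i2: "integrable M (\<lambda>w. 2 * (Sn w * u n w) * \<xi> n w)"
  proof (rule integrable_bdd[where B="2 * ((real n * (U * C)) * (U * C))"])
    show "(\<lambda>w. 2 * (Sn w * u n w) * \<xi> n w) \<in> borel_measurable M" using SnM uM \<xi>M by simp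
    fix w assume w: "w \<in> space M"
    have "\<bar>Sn w * (u n w * \<xi> n w)\<bar> \<le> (real n * (U * C)) * (U * C)"
      unfolding abs_mult[of "Sn w"] using Snb[OF w] dn_b[OF w] by (intro mult_mono) auto
    then show "\<bar>2 * (Sn w * u n w) * \<xi> n w\<bar> \<le> 2 * ((real n * (U * C)) * (U * C))"
      by (simp add: abs_mult mult.assoc)
  qed
  have i3: "integrable M (\<lambda>w. (u n w * \<xi> n w)\<^sup>2)"
  proof (rule integrable_bdd[where B="(U * C)\<^sup>2"])
    show "(\<lambda>w. (u n w * \<xi> n w)\<^sup>2) \<in> borel_measurable M" using uM \<xi>M by simp
    fix w assume w: "w \<in> space M"
    show "\<bar>(u n w * \<xi> n w)\<^sup>2\<bar> \<le> (U * C)\<^sup>2"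
    proof -
      have "\<bar>u n w * \<xi> n w\<bar>\<^sup>2 \<le> (U * C)\<^sup>2" by (rule power_mono[OF dn_b[OF w] abs_ge_zero])
      then show ?thesis by simp
    qed
  qed
  have z: "(\<integral>w. 2 * (Sn w * u n w) * \<xi> n w \<partial>M) = 0"
  proof -
    have g: "(\<lambda>w. 2 * (Sn w * u n w)) \<in> borel_measurable (F n)" using SnF um[of n] by simp
    have gb: "\<bar>2 * (Sn w * u n w)\<bar> \<le> 2 * ((real n * (U * C)) * U)" if w: "w \<in> space M" for w
    proof -
      have "\<bar>Sn w * u n w\<bar> \<le> (real n * (U * C)) * U"
        unfolding abs_mult using Snb[OF w] ub[OF w, of n] by (intro mult_mono) auto
      then show ?thesis by simp
    qed
    show ?thesis by (rule mart[OF g gb])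
  qed
  have "(\<lambda>w. (\<Sum>i<Suc n. u i w * \<xi> i w)\<^sup>2) = (\<lambda>w. (Sn w)\<^sup>2 + 2 * (Sn w * u n w) * \<xi> n w + (u n w * \<xi> n w)\<^sup>2)"
    by (simp add: Sn_def power2_eq_square algebra_simps)
  then have "(\<integral>w. (\<Sum>i<Suc n. u i w * \<xi> i w)\<^sup>2 \<partial>M) = (\<integral>w. (Sn w)\<^sup>2 \<partial>M) + (\<integral>w. 2 * (Sn w * u n w) * \<xi> n w \<partial>M) + (\<integral>w. (u n w * \<xi> n w)\<^sup>2 \<partial>M)"
    using i1 i2 i3 by simp
  also have "\<dots> = (\<Sum>i<Suc n. \<integral>w. (u i w * \<xi> i w)\<^sup>2 \<partial>M)"
    using Suc.IH z by (simp add: Sn_def)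
  finally show ?case .
qed

end

locale mgu = mg M F \<xi> C for M :: "'w measure" and F \<xi> C +
  fixes u :: "nat \<Rightarrow> 'w \<Rightarrow> real" and U K :: real
  assumes um: "\<And>i. u i \<in> borel_measurable (F i)"
    and ub: "\<And>i w. w \<in> space M \<Longrightarrow> \<bar>u i w\<bar> \<le> U"
    and usq: "\<And>n w. w \<in> space M \<Longrightarrow> (\<Sum>i<n. (u i w)\<^sup>2) \<le> K"
begin

definition D :: "nat \<Rightarrow> 'w \<Rightarrow> real" where
  "D n w = (\<Sum>i<n. u i w * \<xi> i w)"

definition Ed :: "nat \<Rightarrow> real" where
  "Ed i = (\<integral>w. (u i w * \<xi> i w)\<^sup>2 \<partial>M)"

lemma DF: "D n \<in> borel_measurable (F n)"
  unfolding D_def[abs_def] by (rule psum_meas[OF um])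

lemma DM: "D n \<in> borel_measurable M" by (rule FM[OF DF])

lemma uM: "u i \<in> borel_measurable M" by (rule FM[OF um])
lemma \<xi>M: "\<xi> i \<in> borel_measurable M" by (rule FM[OF \<xi>m])

lemma U0: "0 \<le> U" using ub[of _ 0] by (metis abs_ge_zero order_trans not_empty ex_in_conv)

lemma Ed_nn: "0 \<le> Ed i" unfolding Ed_def by simp

lemma Ed_le: "Ed i \<le> C\<^sup>2 * (\<integral>w. (u i w)\<^sup>2 \<partial>M)"
proof -
  note [measurable] = uM \<xi>M
  have "Ed i \<le> (\<integral>w. C\<^sup>2 * (u i w)\<^sup>2 \<partial>M)"
    unfolding Ed_def
  proof (rule integral_mono)
    show "integrable M (\<lambda>w. (u i w * \<xi> i w)\<^sup>2)"
    proof (rule integrable_bdd[where B="(U * C)\<^sup>2"])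
      show "(\<lambda>w. (u i w * \<xi> i w)\<^sup>2) \<in> borel_measurable M" by measurable
      fix w assume w: "w \<in> space M"
      have "\<bar>u i w * \<xi> i w\<bar> \<le> U * C" unfolding abs_mult using ub[OF w, of i] \<xi>b[OF w, of i] by (intro mult_mono) auto
      then have "\<bar>u i w * \<xi> i w\<bar>\<^sup>2 \<le> (U * C)\<^sup>2" by (rule power_mono) simp
      then show "\<bar>(u i w * \<xi> i w)\<^sup>2\<bar> \<le> (U * C)\<^sup>2" by simp
    qed
    show "integrable M (\<lambda>w. C\<^sup>2 * (u i w)\<^sup>2)"
    proof (rule integrable_bdd[where B="C\<^sup>2 * U\<^sup>2"])
      show "(\<lambda>w. C\<^sup>2 * (u i w)\<^sup>2) \<in> borel_measurable M" by measurable
      fix w assume w: "w \<in> space M"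
      have "\<bar>u i w\<bar>\<^sup>2 \<le> U\<^sup>2" by (rule power_mono[OF ub[OF w] abs_ge_zero])
      then show "\<bar>C\<^sup>2 * (u i w)\<^sup>2\<bar> \<le> C\<^sup>2 * U\<^sup>2" by (simp add: abs_mult mult_left_mono)
    qed
    fix w assume w: "w \<in> space M"
    have "\<bar>\<xi> i w\<bar>\<^sup>2 \<le> C\<^sup>2" by (rule power_mono[OF \<xi>b[OF w] abs_ge_zero])
    then have "(\<xi> i w)\<^sup>2 * (u i w)\<^sup>2 \<le> C\<^sup>2 * (u i w)\<^sup>2" by (intro mult_right_mono) auto
    then show "(u i w * \<xi> i w)\<^sup>2 \<le> C\<^sup>2 * (u i w)\<^sup>2" by (simp add: power_mult_distrib mult.commute)
  qed
  also have "\<dots> = C\<^sup>2 * (\<integral>w. (u i w)\<^sup>2 \<partial>M)" by simp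
  finally show ?thesis .
qed

lemma int_usq: "integrable M (\<lambda>w. (u i w)\<^sup>2)"
proof (rule integrable_bdd[where B="U\<^sup>2"])
  show "(\<lambda>w. (u i w)\<^sup>2) \<in> borel_measurable M" using uM by measurable
  fix w assume w: "w \<in> space M"
  have "\<bar>u i w\<bar>\<^sup>2 \<le> U\<^sup>2" by (rule power_mono[OF ub[OF w] abs_ge_zero])
  then show "\<bar>(u i w)\<^sup>2\<bar> \<le> U\<^sup>2" by simp
qed

lemma Ed_summable: "summable Ed"
proof (rule summableI_nonneg_bounded[where x="C\<^sup>2 * K"])
  show "0 \<le> Ed n" for n by (rule Ed_nn)
  fix n
  have "(\<Sum>i<n. Ed i) \<le> (\<Sum>i<n. C\<^sup>2 * (\<integral>w. (u i w)\<^sup>2 \<partial>M))" by (intro sum_mono Ed_le)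
  also have "\<dots> = C\<^sup>2 * (\<integral>w. (\<Sum>i<n. (u i w)\<^sup>2) \<partial>M)"
    by (simp add: sum_distrib_left int_usq)
  also have "\<dots> \<le> C\<^sup>2 * (\<integral>w. K \<partial>M)"
  proof (intro mult_left_mono integral_mono)
    show "integrable M (\<lambda>w. \<Sum>i<n. (u i w)\<^sup>2)" by (simp add: int_usq)
    show "integrable M (\<lambda>w. K)" by simp
  qed (auto simp: usq)
  also have "\<dots> = C\<^sup>2 * K" by (simp add: prob_space)
  finally show "(\<Sum>i<n. Ed i) \<le> C\<^sup>2 * K" .
qed

definition tlm :: "nat \<Rightarrow> real" where
  "tlm m = suminf Ed - (\<Sum>i<m. Ed i)"

lemma tl_lim: "tlm \<longlonglongrightarrow> 0"
proof -
  have "(\<lambda>n. \<Sum>i<n. Ed i) \<longlonglongrightarrow> suminf Ed" using Ed_summable by (simp add: summable_LIMSEQ)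
  then have "(\<lambda>n. suminf Ed - (\<Sum>i<n. Ed i)) \<longlonglongrightarrow> suminf Ed - suminf Ed"
    by (intro tendsto_diff tendsto_const)
  moreover have "tlm = (\<lambda>n. suminf Ed - (\<Sum>i<n. Ed i))" by (simp add: fun_eq_iff tlm_def)
  ultimately show ?thesis by simp
qed

lemma sum_le_tl: "(\<Sum>i\<in>{m..<n}. Ed i) \<le> tlm m"
proof -
  have le: "(\<Sum>i<k. Ed i) \<le> suminf Ed" for k
    by (rule sum_le_suminf[OF Ed_summable]) (auto simp: Ed_nn)
  show ?thesis
  proof (cases "m \<le> n")
    case True
    have "(\<Sum>i<n. Ed i) = (\<Sum>i<m. Ed i) + (\<Sum>i\<in>{m..<n}. Ed i)"
      using sum.atLeastLessThan_concat[of 0 m n Ed] True by (simp add: lessThan_atLeast0)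
    then show ?thesis using le[of n] by (simp add: tlm_def)
  next
    case False
    then show ?thesis using le[of m] by (simp add: tlm_def)
  qed
qed

lemma cheb:
  assumes X: "X \<in> borel_measurable M" and Xb: "\<And>w. w \<in> space M \<Longrightarrow> \<bar>X w\<bar> \<le> B" and lp: "lm > 0"
  shows "measure M {w\<in>space M. lm \<le> \<bar>X w\<bar>} \<le> (\<integral>w. (X w)\<^sup>2 \<partial>M) / lm\<^sup>2"
proof -
  define A where "A = {w\<in>space M. lm \<le> \<bar>X w\<bar>}"
  have A: "A \<in> sets M" unfolding A_def using X by measurable
  have "lm\<^sup>2 * measure M A = (\<integral>w. lm\<^sup>2 * indicator A w \<partial>M)"
    using A by (simp add: Int_absorb2 sets.sets_into_space)
  also have "\<dots> \<le> (\<integral>w. (X w)\<^sup>2 \<partial>M)"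
  proof (rule integral_mono)
    show "integrable M (\<lambda>w. lm\<^sup>2 * indicator A w)"
      by (rule integrable_bdd[where B="lm\<^sup>2"]) (use A in \<open>auto simp: indicator_def\<close>)
    show "integrable M (\<lambda>w. (X w)\<^sup>2)"
    proof (rule integrable_bdd[where B="B\<^sup>2"])
      show "(\<lambda>w. (X w)\<^sup>2) \<in> borel_measurable M" using X by simp
      fix w assume w: "w \<in> space M"
      have "\<bar>X w\<bar>\<^sup>2 \<le> B\<^sup>2" by (rule power_mono[OF Xb[OF w] abs_ge_zero])
      then show "\<bar>(X w)\<^sup>2\<bar> \<le> B\<^sup>2" by simp
    qed
    fix w assume w: "w \<in> space M"
    show "lm\<^sup>2 * indicator A w \<le> (X w)\<^sup>2"
    proof (cases "w \<in> A")
      case True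
      then have "lm \<le> \<bar>X w\<bar>" by (simp add: A_def)
      then have "lm\<^sup>2 \<le> \<bar>X w\<bar>\<^sup>2" using lp by (intro power_mono) auto
      then show ?thesis using True by simp
    qed simp
  qed
  finally show ?thesis using lp by (simp add: A_def field_simps)
qed

lemma maximal:
  assumes lp: "lm > 0" and mn: "m \<le> n"
  shows "measure M {w\<in>space M. \<exists>k\<in>{m..n}. lm \<le> \<bar>D k w - D m w\<bar>} \<le> (\<Sum>i\<in>{m..<n}. Ed i) / lm\<^sup>2"
proof -
  note [measurable] = uM \<xi>M
  define P where "P i w = (m \<le> i \<and> (\<forall>k\<in>{m..i}. \<bar>D k w - D m w\<bar> < lm))" for i w
  define g where "g i w = (if P i w then u i w else 0)" for i w
  have Pm: "Measurable.pred (F i) (P i)" for i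
  proof (cases "m \<le> i")
    case True
    have "Measurable.pred (F i) (\<lambda>w. \<forall>k\<in>{m..i}. \<bar>D k w - D m w\<bar> < lm)"
    proof (rule pred_intros_finite(3))
      fix k assume k: "k \<in> {m..i}"
      have a: "D k \<in> borel_measurable (F i)" using Fmono[OF DF[of k]] k by auto
      have b: "D m \<in> borel_measurable (F i)" using Fmono[OF DF[of m]] True by auto
      note [measurable] = a b
      show "Measurable.pred (F i) (\<lambda>w. \<bar>D k w - D m w\<bar> < lm)" by measurable
    qed simp
    then show ?thesis using True unfolding P_def[abs_def] by simp
  next
    case False then show ?thesis unfolding P_def[abs_def] by simp
  qed
  have gF: "g i \<in> borel_measurable (F i)" for i
  proof -
    note [measurable] = Pm[of i] um[of i]
    show ?thesis unfolding g_def[abs_def] by measurable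
  qed
  have gb: "\<bar>g i w\<bar> \<le> U" if "w \<in> space M" for i w
    using ub[OF that, of i] U0 by (simp add: g_def)
  define V where "V w = (\<Sum>i<n. g i w * \<xi> i w)" for w
  have VF: "V \<in> borel_measurable M" unfolding V_def[abs_def] by (rule FM[OF psum_meas[OF gF]])
  have Vb: "\<bar>V w\<bar> \<le> real n * (U * C)" if "w \<in> space M" for w
    unfolding V_def by (rule psum_bdd[OF gb that])
  have EV: "(\<integral>w. (V w)\<^sup>2 \<partial>M) = (\<Sum>i<n. \<integral>w. (g i w * \<xi> i w)\<^sup>2 \<partial>M)"
    unfolding V_def by (rule ortho_sum[OF gF gb])
  have gi: "(\<integral>w. (g i w * \<xi> i w)\<^sup>2 \<partial>M) \<le> (if m \<le> i then Ed i else 0)" for i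
  proof (cases "m \<le> i")
    case True
    show ?thesis unfolding Ed_def using True
    proof (simp, intro integral_mono)
      show "integrable M (\<lambda>w. (g i w * \<xi> i w)\<^sup>2)"
      proof (rule integrable_bdd[where B="(U * C)\<^sup>2"])
        show "(\<lambda>w. (g i w * \<xi> i w)\<^sup>2) \<in> borel_measurable M" using FM[OF gF[of i]] by measurable
        fix w assume w: "w \<in> space M"
        have "\<bar>g i w * \<xi> i w\<bar> \<le> U * C" unfolding abs_mult using gb[OF w, of i] \<xi>b[OF w, of i] by (intro mult_mono) auto
        then have "\<bar>g i w * \<xi> i w\<bar>\<^sup>2 \<le> (U * C)\<^sup>2" by (rule power_mono) simp
        then show "\<bar>(g i w * \<xi> i w)\<^sup>2\<bar> \<le> (U * C)\<^sup>2" by simp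
      qed
      show "integrable M (\<lambda>w. (u i w * \<xi> i w)\<^sup>2)"
      proof (rule integrable_bdd[where B="(U * C)\<^sup>2"])
        show "(\<lambda>w. (u i w * \<xi> i w)\<^sup>2) \<in> borel_measurable M" by measurable
        fix w assume w: "w \<in> space M"
        have "\<bar>u i w * \<xi> i w\<bar> \<le> U * C" unfolding abs_mult using ub[OF w, of i] \<xi>b[OF w, of i] by (intro mult_mono) auto
        then have "\<bar>u i w * \<xi> i w\<bar>\<^sup>2 \<le> (U * C)\<^sup>2" by (rule power_mono) simp
        then show "\<bar>(u i w * \<xi> i w)\<^sup>2\<bar> \<le> (U * C)\<^sup>2" by simp
      qed
      fix w show "(g i w * \<xi> i w)\<^sup>2 \<le> (u i w * \<xi> i w)\<^sup>2" by (simp add: g_def)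
    qed
  next
    case False
    then have "g i = (\<lambda>w. 0)" by (simp add: g_def P_def fun_eq_iff)
    then show ?thesis using False by simp
  qed
  have "(\<integral>w. (V w)\<^sup>2 \<partial>M) \<le> (\<Sum>i<n. if m \<le> i then Ed i else 0)"
    unfolding EV by (intro sum_mono gi)
  also have "\<dots> = (\<Sum>i\<in>{m..<n}. Ed i)"
  proof -
    have "(\<Sum>i<n. if m \<le> i then Ed i else 0) = (\<Sum>i\<in>{..<n} \<inter> {i. m \<le> i}. Ed i)"
      using sum.inter_restrict[of "{..<n}" Ed "{i. m \<le> i}"] by simp
    also have "{..<n} \<inter> {i. m \<le> i} = {m..<n}" by auto
    finally show ?thesis .
  qed
  finally have EV2: "(\<integral>w. (V w)\<^sup>2 \<partial>M) \<le> (\<Sum>i\<in>{m..<n}. Ed i)" .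
  have sub: "{w\<in>space M. \<exists>k\<in>{m..n}. lm \<le> \<bar>D k w - D m w\<bar>} \<subseteq> {w\<in>space M. lm \<le> \<bar>V w\<bar>}"
  proof safe
    fix w k assume w: "w \<in> space M" and k: "k \<in> {m..n}" and kl: "lm \<le> \<bar>D k w - D m w\<bar>"
    define k0 where "k0 = (LEAST k. k \<in> {m..n} \<and> lm \<le> \<bar>D k w - D m w\<bar>)"
    have k0: "k0 \<in> {m..n}" "lm \<le> \<bar>D k0 w - D m w\<bar>"
      using LeastI[of "\<lambda>k. k \<in> {m..n} \<and> lm \<le> \<bar>D k w - D m w\<bar>" k] k kl by (auto simp: k0_def)
    have before: "\<bar>D j w - D m w\<bar> < lm" if "j \<in> {m..n}" "j < k0" for j
      using not_less_Least[of j "\<lambda>k. k \<in> {m..n} \<and> lm \<le> \<bar>D k w - D m w\<bar>"] that by (auto simp: k0_def)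
    have gi_eq: "g i w = (if i \<in> {m..<k0} then u i w else 0)" if "i < n" for i
    proof (cases "i \<in> {m..<k0}")
      case True
      have "P i w" unfolding P_def using True that by (auto intro!: before)
      then show ?thesis using True by (simp add: g_def)
    next
      case False
      have "\<not> P i w"
      proof
        assume Pi: "P i w"
        then have "m \<le> i" by (simp add: P_def)
        with False have "k0 \<le> i" by auto
        then have "k0 \<in> {m..i}" using k0 by auto
        then have "\<bar>D k0 w - D m w\<bar> < lm" using Pi by (simp add: P_def)
        with k0 show False by simp
      qed
      then show ?thesis using False by (auto simp: g_def)
    qed
    have "V w = (\<Sum>i<n. if i \<in> {m..<k0} then u i w * \<xi> i w else 0)"
      unfolding V_def by (intro sum.cong refl) (simp add: gi_eq)
    also have "\<dots> = (\<Sum>i\<in>{..<n} \<inter> {m..<k0}. u i w * \<xi> i w)"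
      by (simp add: sum.inter_restrict)
    also have "{..<n} \<inter> {m..<k0} = {m..<k0}" using k0 by auto
    also have "(\<Sum>i\<in>{m..<k0}. u i w * \<xi> i w) = D k0 w - D m w"
      using sum.atLeastLessThan_concat[of 0 m k0 "\<lambda>i. u i w * \<xi> i w"] k0
      by (simp add: D_def lessThan_atLeast0)
    finally show "lm \<le> \<bar>V w\<bar>" using k0 by simp
  qed
  have "measure M {w\<in>space M. \<exists>k\<in>{m..n}. lm \<le> \<bar>D k w - D m w\<bar>} \<le> measure M {w\<in>space M. lm \<le> \<bar>V w\<bar>}"
    by (rule finite_measure_mono[OF sub]) (use VF in measurable)
  also have "\<dots> \<le> (\<integral>w. (V w)\<^sup>2 \<partial>M) / lm\<^sup>2" by (rule cheb[OF VF Vb lp])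
  also have "\<dots> \<le> (\<Sum>i\<in>{m..<n}. Ed i) / lm\<^sup>2" using EV2 lp by (simp add: divide_right_mono)
  finally show ?thesis .
qed

lemma maximal_inf:
  assumes lp: "lm > 0"
  shows "measure M {w\<in>space M. \<exists>k. m \<le> k \<and> lm \<le> \<bar>D k w - D m w\<bar>} \<le> tlm m / lm\<^sup>2"
proof -
  note [measurable] = DM
  define A where "A j = {w\<in>space M. \<exists>k\<in>{m..m+j}. lm \<le> \<bar>D k w - D m w\<bar>}" for j
  have Aj: "A j \<in> sets M" for j unfolding A_def by measurable
  then have Asets: "range A \<subseteq> sets M" by auto
  have inc: "incseq A" unfolding incseq_def A_def by force
  have U: "(\<Union>j. A j) = {w\<in>space M. \<exists>k. m \<le> k \<and> lm \<le> \<bar>D k w - D m w\<bar>}"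
  proof safe
    fix w k assume "w \<in> space M" "m \<le> k" "lm \<le> \<bar>D k w - D m w\<bar>"
    then show "w \<in> (\<Union>j. A j)" unfolding A_def
      by (intro UN_I[of "k - m"]) auto
  qed (auto simp: A_def)
  have lim: "(\<lambda>j. measure M (A j)) \<longlonglongrightarrow> measure M (\<Union>j. A j)"
    by (rule finite_Lim_measure_incseq[OF Asets inc])
  have "measure M (A j) \<le> tlm m / lm\<^sup>2" for j
  proof -
    have "measure M (A j) \<le> (\<Sum>i\<in>{m..<m+j}. Ed i) / lm\<^sup>2"
      unfolding A_def by (rule maximal[OF lp]) simp
    also have "\<dots> \<le> tlm m / lm\<^sup>2" using sum_le_tl lp by (simp add: divide_right_mono)
    finally show ?thesis .
  qed
  then have "measure M (\<Union>j. A j) \<le> tlm m / lm\<^sup>2"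
    using LIMSEQ_le_const2[OF lim] by blast
  then show ?thesis using U by simp
qed

lemma null_osc:
  assumes lp: "lm > 0"
  shows "AE w in M. \<exists>m. \<forall>k. m \<le> k \<longrightarrow> \<bar>D k w - D m w\<bar> < lm"
proof -
  note [measurable] = DM
  define N where "N = {w\<in>space M. \<forall>m. \<exists>k. m \<le> k \<and> lm \<le> \<bar>D k w - D m w\<bar>}"
  have Ns: "N \<in> sets M" unfolding N_def by measurable
  have le: "measure M N \<le> tlm m / lm\<^sup>2" for m
  proof -
    have "measure M N \<le> measure M {w\<in>space M. \<exists>k. m \<le> k \<and> lm \<le> \<bar>D k w - D m w\<bar>}"
      by (rule finite_measure_mono) (auto simp: N_def)
    also have "\<dots> \<le> tlm m / lm\<^sup>2" by (rule maximal_inf[OF lp])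
    finally show ?thesis .
  qed
  have "(\<lambda>m. tlm m / lm\<^sup>2) \<longlonglongrightarrow> 0 / lm\<^sup>2"
    by (intro tendsto_divide tl_lim tendsto_const) (use lp in simp)
  then have "measure M N \<le> 0" using le by (intro LIMSEQ_le_const) auto
  then have "measure M N = 0" by (simp add: order.antisym)
  then have "N \<in> null_sets M" using Ns by (simp add: emeasure_eq_measure null_sets_def)
  then show ?thesis
    by (rule AE_I') (auto simp: N_def not_less)
qed

theorem as_conv: "AE w in M. summable (\<lambda>i. u i w * \<xi> i w)"
proof -
  have "AE w in M. \<forall>j::nat. \<exists>m. \<forall>k. m \<le> k \<longrightarrow> \<bar>D k w - D m w\<bar> < 1 / Suc j"
    unfolding AE_all_countable by (intro allI null_osc) simp
  then show ?thesis
  proof eventually_elim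
    case (elim w)
    show ?case unfolding summable_Cauchy
    proof (intro allI impI)
      fix e :: real assume ep: "e > 0"
      obtain j :: nat where j: "1 / Suc j < e / 2"
        using ep by (metis half_gt_zero nat_approx_posE)
      obtain m where m: "\<And>k. m \<le> k \<Longrightarrow> \<bar>D k w - D m w\<bar> < 1 / Suc j" using elim by blast
      show "\<exists>N. \<forall>m'\<ge>N. \<forall>n. norm (\<Sum>i = m'..<n. u i w * \<xi> i w) < e"
      proof (intro exI allI impI)
        fix m' n assume mm: "m \<le> m'"
        show "norm (\<Sum>i = m'..<n. u i w * \<xi> i w) < e"
        proof (cases "m' \<le> n")
          case True
          have eq: "(\<Sum>i = m'..<n. u i w * \<xi> i w) = D n w - D m' w"
            using sum.atLeastLessThan_concat[of 0 m' n "\<lambda>i. u i w * \<xi> i w"] True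
            by (simp add: D_def lessThan_atLeast0)
          have h1: "\<bar>D n w - D m w\<bar> < e / 2" using m[of n] mm True j by simp
          have h2: "\<bar>D m' w - D m w\<bar> < e / 2" using m[of m'] mm j by simp
          have a1: "D n w - D m w < e / 2" "D m w - D n w < e / 2" using h1 by arith+
          have a2: "D m' w - D m w < e / 2" "D m w - D m' w < e / 2" using h2 by arith+
          have "D n w - D m' w < e" "D m' w - D n w < e" using a1 a2 by linarith+
          then show ?thesis unfolding eq real_norm_def by (simp add: abs_less_iff)
        next
          case False then show ?thesis using ep by simp
        qed
      qed
    qed
  qed
qed

end


locale setting = prob_space M for M :: "'w measure" +
  fixes p :: "'s::finite \<Rightarrow> 'a::finite \<Rightarrow> 's \<Rightarrow> real"
    and r :: "'s \<Rightarrow> 'a \<Rightarrow> 's \<Rightarrow> real"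
    and e :: 's
    and \<beta> :: real
    and \<eta> :: "nat \<Rightarrow> 'w \<Rightarrow> real"
    and S :: "nat \<Rightarrow> 'w \<Rightarrow> 's" and A :: "nat \<Rightarrow> 'w \<Rightarrow> 'a" and S' :: "nat \<Rightarrow> 'w \<Rightarrow> 's"
    and zmin zmax :: real
  assumes mdp: "transient_mdp p r e"
    and beta_pos: "\<beta> > 0"
    and meas_eta: "\<And>i. \<eta> i \<in> borel_measurable M"
    and meas_S: "\<And>i. S i \<in> measurable M (count_space UNIV)"
    and meas_A: "\<And>i. A i \<in> measurable M (count_space UNIV)"
    and meas_S': "\<And>i. S' i \<in> measurable M (count_space UNIV)"
    and eta_nonneg: "\<And>i w. w \<in> space M \<Longrightarrow> 0 \<le> \<eta> i w"
    and cond_prob: "\<And>i s'. AE w in M.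
          real_cond_exp M (hist_sigma M \<eta> S A S' i)
            (\<lambda>w. indicator {w. S' i w = s'} w) w = p (S i w) (A i w) s'"
    and sum_inf: "AE w in M. \<forall>s a.
          (\<Sum>i. ennreal (if (S i w, A i w) = (s, a) then \<eta> i w else 0)) = \<infinity>"
    and sum_sq: "AE w in M. \<forall>s a.
          (\<Sum>i. ennreal (if (S i w, A i w) = (s, a) then (\<eta> i w)\<^sup>2 else 0)) < \<infinity>"
    and zle: "zmin \<le> zmax"
    and z_bound: "AE w in M. \<forall>i. zit \<beta> r \<eta> S A S' i w \<in> {zmin..zmax}"
begin

definition GG :: "nat \<Rightarrow> 'w set set" where
  "GG i = {\<eta> l -` B \<inter> space M | l B. l \<le> i \<and> B \<in> sets borel}
      \<union> {S l -` B \<inter> space M | l B. l \<le> i}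
      \<union> {A l -` B \<inter> space M | l B. l \<le> i}
      \<union> {S' l -` B \<inter> space M | l B. l < i}"

abbreviation F :: "nat \<Rightarrow> 'w measure" where
  "F i \<equiv> hist_sigma M \<eta> S A S' i"

lemma GG_pow: "GG i \<subseteq> Pow (space M)" unfolding GG_def by auto

lemma F_eq: "F i = sigma (space M) (GG i)" unfolding hist_sigma_def GG_def by (rule refl)

lemma sets_F: "sets (F i) = sigma_sets (space M) (GG i)"
  unfolding F_eq using GG_pow by (simp add: sets_measure_of)

lemma space_F: "space (F i) = space M"
  unfolding F_eq by (simp add: space_measure_of_conv)

lemma GG_sets: "GG i \<subseteq> sets M"
  unfolding GG_def
proof (intro Un_least subsetI)
  fix X assume "X \<in> {\<eta> l -` B \<inter> space M | l B. l \<le> i \<and> B \<in> sets borel}"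
  then obtain l B where "X = \<eta> l -` B \<inter> space M" "B \<in> sets borel" by blast
  then show "X \<in> sets M" using measurable_sets[OF meas_eta] by simp
next
  fix X assume "X \<in> {S l -` B \<inter> space M | l B. l \<le> i}"
  then obtain l B where "X = S l -` B \<inter> space M" by blast
  then show "X \<in> sets M" using measurable_sets[OF meas_S, of B l] by simp
next
  fix X assume "X \<in> {A l -` B \<inter> space M | l B. l \<le> i}"
  then obtain l B where "X = A l -` B \<inter> space M" by blast
  then show "X \<in> sets M" using measurable_sets[OF meas_A, of B l] by simp
next
  fix X assume "X \<in> {S' l -` B \<inter> space M | l B. l < i}"
  then obtain l B where "X = S' l -` B \<inter> space M" by blast
  then show "X \<in> sets M" using measurable_sets[OF meas_S', of B l] by simp
qed

lemma subF: "subalgebra M (F i)"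
  unfolding subalgebra_def space_F sets_F using sets.sigma_sets_subset[OF GG_sets] by simp

lemma filtF: "i \<le> j \<Longrightarrow> subalgebra (F j) (F i)"
proof -
  assume ij: "i \<le> j"
  have "GG i \<subseteq> GG j" unfolding GG_def
    by (intro Un_mono subsetI) (use ij in \<open>blast intro: le_trans less_le_trans\<close>)+
  then show ?thesis unfolding subalgebra_def space_F sets_F by (simp add: sigma_sets_mono')
qed

lemma GG_in_F: "X \<in> GG i \<Longrightarrow> X \<in> sets (F i)"
  unfolding sets_F by (rule sigma_sets.Basic)

lemma GG_eta: "l \<le> i \<Longrightarrow> B \<in> sets borel \<Longrightarrow> \<eta> l -` B \<inter> space M \<in> GG i"
proof -
  assume "l \<le> i" "B \<in> sets borel"
  then have "\<eta> l -` B \<inter> space M \<in> {\<eta> l -` B \<inter> space M | l B. l \<le> i \<and> B \<in> sets borel}" by blast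
  then show ?thesis unfolding GG_def by (rule UnI1[OF UnI1[OF UnI1]])
qed

lemma GG_S: "l \<le> i \<Longrightarrow> S l -` B \<inter> space M \<in> GG i"
proof -
  assume "l \<le> i"
  then have "S l -` B \<inter> space M \<in> {S l -` B \<inter> space M | l B. l \<le> i}" by blast
  then show ?thesis unfolding GG_def by (rule UnI1[OF UnI1[OF UnI2]])
qed

lemma GG_A: "l \<le> i \<Longrightarrow> A l -` B \<inter> space M \<in> GG i"
proof -
  assume "l \<le> i"
  then have "A l -` B \<inter> space M \<in> {A l -` B \<inter> space M | l B. l \<le> i}" by blast
  then show ?thesis unfolding GG_def by (rule UnI1[OF UnI2])
qed

lemma GG_S': "l < i \<Longrightarrow> S' l -` B \<inter> space M \<in> GG i"
proof -
  assume "l < i"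
  then have "S' l -` B \<inter> space M \<in> {S' l -` B \<inter> space M | l B. l < i}" by blast
  then show ?thesis unfolding GG_def by (rule UnI2)
qed

lemma eta_F: "l \<le> i \<Longrightarrow> \<eta> l \<in> borel_measurable (F i)"
  by (rule measurableI) (auto simp: space_F intro!: GG_in_F GG_eta)

lemma S_F: "l \<le> i \<Longrightarrow> S l \<in> measurable (F i) (count_space UNIV)"
  by (rule measurableI) (auto simp: space_F intro!: GG_in_F GG_S)

lemma A_F: "l \<le> i \<Longrightarrow> A l \<in> measurable (F i) (count_space UNIV)"
  by (rule measurableI) (auto simp: space_F intro!: GG_in_F GG_A)

lemma S'_F: "l < i \<Longrightarrow> S' l \<in> measurable (F i) (count_space UNIV)"
  by (rule measurableI) (auto simp: space_F intro!: GG_in_F GG_S')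

lemma FmonoF: "f \<in> borel_measurable (F i) \<Longrightarrow> i \<le> j \<Longrightarrow> f \<in> borel_measurable (F j)"
  by (rule measurable_from_subalg[OF filtF])

lemma FM: "f \<in> measurable (F i) N \<Longrightarrow> f \<in> measurable M N"
  by (rule measurable_from_subalg[OF subF])

lemma comp_s:
  fixes f :: "'s \<Rightarrow> 'w \<Rightarrow> real"
  assumes "\<And>s. f s \<in> borel_measurable N" "g \<in> measurable N (count_space UNIV)"
  shows "(\<lambda>w. f (g w) w) \<in> borel_measurable N"
  by (rule measurable_compose_countable'[OF _ assms(2)]) (use assms(1) in auto)

lemma comp_a:
  fixes f :: "'a \<Rightarrow> 'w \<Rightarrow> real"
  assumes "\<And>s. f s \<in> borel_measurable N" "g \<in> measurable N (count_space UNIV)"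
  shows "(\<lambda>w. f (g w) w) \<in> borel_measurable N"
  by (rule measurable_compose_countable'[OF _ assms(2)]) (use assms(1) in auto)

abbreviation qq :: "nat \<Rightarrow> 'w \<Rightarrow> 's \<Rightarrow> 'a \<Rightarrow> real" where
  "qq \<equiv> qit \<beta> r \<eta> S A S'"

lemma Max_meas:
  fixes f :: "'w \<Rightarrow> 'a \<Rightarrow> real"
  assumes "\<And>a. (\<lambda>w. f w a) \<in> borel_measurable N"
  shows "(\<lambda>w. Max (range (f w))) \<in> borel_measurable N"
proof -
  have "(\<lambda>w. Max ((\<lambda>a. f w a) ` UNIV)) \<in> borel_measurable N"
    by (rule borel_measurable_Max) (auto intro: assms)
  then show ?thesis .
qed

lemma q_F: "(\<lambda>w. qq i w s a) \<in> borel_measurable (F i)"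
proof (induction i arbitrary: s a)
  case 0 then show ?case by simp
next
  case (Suc i)
  have m1: "(\<lambda>w. qq i w s a) \<in> borel_measurable (F (Suc i))" for s a
    by (rule FmonoF[OF Suc.IH]) simp
  have Si: "S i \<in> measurable (F (Suc i)) (count_space UNIV)" by (rule S_F) simp
  have Ai: "A i \<in> measurable (F (Suc i)) (count_space UNIV)" by (rule A_F) simp
  have S'i: "S' i \<in> measurable (F (Suc i)) (count_space UNIV)" by (rule S'_F) simp
  have ei: "\<eta> i \<in> borel_measurable (F (Suc i))" by (rule eta_F) simp
  have m2: "(\<lambda>w. qq i w (S i w) (A i w)) \<in> borel_measurable (F (Suc i))"
  proof (rule comp_s[OF _ Si, where f="\<lambda>s w. qq i w s (A i w)"])
    fix s show "(\<lambda>w. qq i w s (A i w)) \<in> borel_measurable (F (Suc i))"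
      by (rule comp_a[OF _ Ai, where f="\<lambda>a w. qq i w s a"]) (rule m1)
  qed
  have m3: "(\<lambda>w. Max (range (qq i w (S' i w)))) \<in> borel_measurable (F (Suc i))"
  proof (rule comp_s[OF _ S'i, where f="\<lambda>s' w. Max (range (qq i w s'))"])
    fix s' show "(\<lambda>w. Max (range (qq i w s'))) \<in> borel_measurable (F (Suc i))"
      by (rule Max_meas) (rule m1)
  qed
  have m4: "(\<lambda>w. r (S i w) (A i w) (S' i w)) \<in> borel_measurable (F (Suc i))"
  proof (rule comp_s[OF _ Si, where f="\<lambda>s w. r s (A i w) (S' i w)"])
    fix s show "(\<lambda>w. r s (A i w) (S' i w)) \<in> borel_measurable (F (Suc i))"
    proof (rule comp_a[OF _ Ai, where f="\<lambda>a w. r s a (S' i w)"])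
      fix a show "(\<lambda>w. r s a (S' i w)) \<in> borel_measurable (F (Suc i))"
        by (rule comp_s[OF _ S'i, where f="\<lambda>s' w. r s a s'"]) simp
    qed
  qed
  have m5: "Measurable.pred (F (Suc i)) (\<lambda>w. (s, a) = (S i w, A i w))"
  proof -
    have "Measurable.pred (F (Suc i)) (\<lambda>w. s = S i w \<and> a = A i w)"
      using Si Ai by measurable
    then show ?thesis by simp
  qed
  have x1: "(\<lambda>w. r (S i w) (A i w) (S' i w) + Max (range (qq i w (S' i w))) - qq i w (S i w) (A i w)) \<in> borel_measurable (F (Suc i))"
    using m4 m3 m2 by (intro borel_measurable_diff borel_measurable_add)
  have x2: "(\<lambda>w. exp (- \<beta> * (r (S i w) (A i w) (S' i w) + Max (range (qq i w (S' i w))) - qq i w (S i w) (A i w))) - 1) \<in> borel_measurable (F (Suc i))"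
  proof -
    have x2a: "(\<lambda>w. - \<beta> * (r (S i w) (A i w) (S' i w) + Max (range (qq i w (S' i w))) - qq i w (S i w) (A i w))) \<in> borel_measurable (F (Suc i))"
      using x1 by (intro borel_measurable_times) auto
    have x2b: "(\<lambda>w. exp (- \<beta> * (r (S i w) (A i w) (S' i w) + Max (range (qq i w (S' i w))) - qq i w (S i w) (A i w)))) \<in> borel_measurable (F (Suc i))"
      by (rule measurable_compose[OF x2a borel_measurable_exp])
    show ?thesis using x2b by (intro borel_measurable_diff) auto
  qed
  have e1: "(\<lambda>w. qq i w s a - \<eta> i w * (exp (- \<beta> * (r (S i w) (A i w) (S' i w) + Max (range (qq i w (S' i w))) - qq i w (S i w) (A i w))) - 1)) \<in> borel_measurable (F (Suc i))"
    by (rule borel_measurable_diff[OF m1[of s a] borel_measurable_times[OF ei x2]])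
  have e2: "(\<lambda>w. if (s, a) = (S i w, A i w) then qq i w s a - \<eta> i w * (exp (- \<beta> * (r (S i w) (A i w) (S' i w) + Max (range (qq i w (S' i w))) - qq i w (S i w) (A i w))) - 1) else qq i w s a) \<in> borel_measurable (F (Suc i))"
    by (rule measurable_If[OF e1 m1 m5[unfolded pred_def]])
  show ?case unfolding qit.simps Let_def using e2 .
qed

end


context setting begin

lemma sfs: "sigma_finite_subalgebra M (F i)"
proof -
  have "finite_measure_subalgebra M (F i)"
    unfolding finite_measure_subalgebra_def finite_measure_subalgebra_axioms_def
    using subF finite_measure_axioms by simp
  then show ?thesis by (rule finite_measure_subalgebra_is_sigma_finite)
qed

lemma pSA_F: "(\<lambda>w. p (S i w) (A i w) s') \<in> borel_measurable (F i)"
proof (rule comp_s[OF _ S_F[of i i], where f="\<lambda>s w. p s (A i w) s'"])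
  fix s show "(\<lambda>w. p s (A i w) s') \<in> borel_measurable (F i)"
    by (rule comp_a[OF _ A_F[of i i], where f="\<lambda>a w. p s a s'"]) simp_all
qed simp

definition val :: "nat \<Rightarrow> 's \<Rightarrow> 'w \<Rightarrow> real" where
  "val i s' w = r (S i w) (A i w) s' + Max (range (qq i w s')) - qq i w (S i w) (A i w)"

lemma val_F: "val i s' \<in> borel_measurable (F i)"
proof -
  have m1: "(\<lambda>w. qq i w s a) \<in> borel_measurable (F i)" for s a by (rule q_F)
  have m2: "(\<lambda>w. qq i w (S i w) (A i w)) \<in> borel_measurable (F i)"
  proof (rule comp_s[OF _ S_F[of i i], where f="\<lambda>s w. qq i w s (A i w)"])
    fix s show "(\<lambda>w. qq i w s (A i w)) \<in> borel_measurable (F i)"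
      by (rule comp_a[OF _ A_F[of i i], where f="\<lambda>a w. qq i w s a"]) (simp_all add: m1)
  qed simp
  have m3: "(\<lambda>w. Max (range (qq i w s'))) \<in> borel_measurable (F i)"
    by (rule Max_meas) (rule m1)
  have m4: "(\<lambda>w. r (S i w) (A i w) s') \<in> borel_measurable (F i)"
  proof (rule comp_s[OF _ S_F[of i i], where f="\<lambda>s w. r s (A i w) s'"])
    fix s show "(\<lambda>w. r s (A i w) s') \<in> borel_measurable (F i)"
      by (rule comp_a[OF _ A_F[of i i], where f="\<lambda>a w. r s a s'"]) simp_all
  qed simp
  show ?thesis unfolding val_def[abs_def]
    by (rule borel_measurable_diff[OF borel_measurable_add[OF m4 m3] m2])
qed

lemma ind_S'_M: "(\<lambda>w. indicator {w. S' i w = s'} w :: real) \<in> borel_measurable M"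
proof -
  have "{w. S' i w = s'} \<inter> space M = S' i -` {s'} \<inter> space M" by auto
  also have "\<dots> \<in> sets M" using measurable_sets[OF meas_S', of "{s'}" i] by simp
  finally show ?thesis by (simp add: borel_measurable_indicator_iff)
qed

lemma cond_int:
  assumes f: "f \<in> borel_measurable (F i)" and fb: "\<And>w. w \<in> space M \<Longrightarrow> \<bar>f w\<bar> \<le> B"
  shows "(\<integral>w. f w * indicator {w. S' i w = s'} w \<partial>M) = (\<integral>w. f w * p (S i w) (A i w) s' \<partial>M)"
proof -
  interpret sigma_finite_subalgebra M "F i" by (rule sfs)
  have fM: "f \<in> borel_measurable M" by (rule FM[OF f])
  have int: "integrable M (\<lambda>w. f w * indicator {w. S' i w = s'} w)"
  proof (rule integrable_bdd[where B=B])
    show "(\<lambda>w. f w * indicator {w. S' i w = s'} w) \<in> borel_measurable M"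
      using fM ind_S'_M by (rule borel_measurable_times)
    fix w assume w: "w \<in> space M"
    have "0 \<le> B" using fb[OF w] by (meson abs_ge_zero order_trans)
    then show "\<bar>f w * indicator {w. S' i w = s'} w\<bar> \<le> B" using fb[OF w] by (auto simp: indicator_def)
  qed
  have "(\<integral>w. f w * real_cond_exp M (F i) (\<lambda>w. indicator {w. S' i w = s'} w) w \<partial>M) = (\<integral>w. f w * indicator {w. S' i w = s'} w \<partial>M)"
    by (rule real_cond_exp_intg(2)[OF int f ind_S'_M])
  moreover have "(\<integral>w. f w * real_cond_exp M (F i) (\<lambda>w. indicator {w. S' i w = s'} w) w \<partial>M) = (\<integral>w. f w * p (S i w) (A i w) s' \<partial>M)"
  proof (rule integral_cong_AE)
    show "(\<lambda>w. f w * real_cond_exp M (F i) (\<lambda>w. indicator {w. S' i w = s'} w) w) \<in> borel_measurable M"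
      using fM by measurable
    show "(\<lambda>w. f w * p (S i w) (A i w) s') \<in> borel_measurable M"
      using fM FM[OF pSA_F] by (rule borel_measurable_times)
    show "AE w in M. f w * real_cond_exp M (F i) (\<lambda>w. indicator {w. S' i w = s'} w) w = f w * p (S i w) (A i w) s'"
      using cond_prob[of i s'] by eventually_elim simp
  qed
  ultimately show ?thesis by simp
qed

lemma G2_ae: "AE w in M. \<forall>i. 0 < p (S i w) (A i w) (S' i w)"
proof -
  have one: "AE w in M. p (S i w) (A i w) s' = 0 \<longrightarrow> S' i w \<noteq> s'" for i s'
  proof -
    define E where "E = {w \<in> space M. p (S i w) (A i w) s' = 0}"
    have EF: "E \<in> sets (F i)"
    proof -
      have "{w \<in> space (F i). p (S i w) (A i w) s' = 0} \<in> sets (F i)"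
        using pSA_F[of i s'] by measurable
      then show ?thesis by (simp add: E_def space_F)
    qed
    have fF: "(\<lambda>w. indicator E w :: real) \<in> borel_measurable (F i)"
    proof -
      have "E \<subseteq> space M" by (auto simp: E_def)
      then show ?thesis using EF by (simp add: borel_measurable_indicator_iff space_F Int_absorb2)
    qed
    have "(\<integral>w. indicator E w * indicator {w. S' i w = s'} w \<partial>M) = (\<integral>w. indicator E w * p (S i w) (A i w) s' \<partial>M)"
      by (rule cond_int[OF fF, where B=1]) (simp add: indicator_def)
    also have "\<dots> = 0" by (rule integral_eq_zero_AE) (auto simp: E_def indicator_def)
    finally have z: "(\<integral>w. (indicator E w :: real) * indicator {w. S' i w = s'} w \<partial>M) = 0" .
    have EM: "E \<in> sets M" using EF subF[of i] by (auto simp: subalgebra_def)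
    have intg: "integrable M (\<lambda>w. indicator E w * indicator {w. S' i w = s'} w :: real)"
    proof (rule integrable_bdd[where B=1])
      show "(\<lambda>w. indicator E w * indicator {w. S' i w = s'} w :: real) \<in> borel_measurable M"
        using EM ind_S'_M by (intro borel_measurable_times) (simp_all add: borel_measurable_indicator_iff)
    qed (simp add: indicator_def)
    have "AE w in M. (indicator E w * indicator {w. S' i w = s'} w :: real) = 0"
      using integral_nonneg_eq_0_iff_AE[OF intg] z by simp
    with AE_space show ?thesis by eventually_elim (auto simp: E_def indicator_def split: if_splits)
  qed
  have "AE w in M. \<forall>i s'. p (S i w) (A i w) s' = 0 \<longrightarrow> S' i w \<noteq> s'"
    unfolding AE_all_countable by (intro allI) (simp add: AE_all_countable[symmetric] one countable_finite)
  then show ?thesis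
  proof eventually_elim
    case (elim w)
    show ?case
    proof
      fix i
      have "p (S i w) (A i w) (S' i w) \<noteq> 0" using elim by blast
      moreover have "0 \<le> p (S i w) (A i w) (S' i w)" by (rule mdp_nonneg[OF mdp])
      ultimately show "0 < p (S i w) (A i w) (S' i w)" by simp
    qed
  qed
qed

lemma zit_val: "zit \<beta> r \<eta> S A S' i w = val i (S' i w) w"
  by (simp add: zit_def val_def Let_def)

lemma G1_ae: "AE w in M. \<forall>i s'. 0 < p (S i w) (A i w) s' \<longrightarrow> val i s' w \<in> {zmin..zmax}"
proof -
  have one: "AE w in M. val i s' w \<notin> {zmin..zmax} \<longrightarrow> p (S i w) (A i w) s' = 0" for i s'
  proof -
    define E where "E = {w \<in> space M. val i s' w \<notin> {zmin..zmax}}"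
    have EF: "E \<in> sets (F i)"
    proof -
      have "{w \<in> space (F i). val i s' w \<notin> {zmin..zmax}} \<in> sets (F i)"
        using val_F[of i s'] by measurable
      then show ?thesis by (simp add: E_def space_F)
    qed
    have fF: "(\<lambda>w. indicator E w :: real) \<in> borel_measurable (F i)"
    proof -
      have "E \<subseteq> space M" by (auto simp: E_def)
      then show ?thesis using EF by (simp add: borel_measurable_indicator_iff space_F Int_absorb2)
    qed
    have EM: "E \<in> sets M" using EF subF[of i] by (auto simp: subalgebra_def)
    have "(\<integral>w. indicator E w * p (S i w) (A i w) s' \<partial>M) = (\<integral>w. indicator E w * indicator {w. S' i w = s'} w \<partial>M)"
      by (rule cond_int[OF fF, where B=1, symmetric]) (simp add: indicator_def)
    also have "\<dots> = 0"
    proof (rule integral_eq_zero_AE)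
      show "AE w in M. (indicator E w * indicator {w. S' i w = s'} w :: real) = 0"
        using z_bound
      proof eventually_elim
        case (elim w)
        then have "zit \<beta> r \<eta> S A S' i w \<in> {zmin..zmax}" by blast
        then show ?case by (auto simp: E_def indicator_def zit_val)
      qed
    qed
    finally have z: "(\<integral>w. indicator E w * p (S i w) (A i w) s' \<partial>M) = 0" .
    have intg: "integrable M (\<lambda>w. indicator E w * p (S i w) (A i w) s')"
    proof (rule integrable_bdd[where B=1])
      show "(\<lambda>w. indicator E w * p (S i w) (A i w) s') \<in> borel_measurable M"
        using EM FM[OF pSA_F] by (intro borel_measurable_times) (simp_all add: borel_measurable_indicator_iff)
      fix w
      have "p (S i w) (A i w) s' \<le> 1"
        using member_le_sum[of s' UNIV "p (S i w) (A i w)"] mdp_sum1[OF mdp] mdp_nonneg[OF mdp] by auto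
      then show "\<bar>indicator E w * p (S i w) (A i w) s'\<bar> \<le> 1"
        using mdp_nonneg[OF mdp] by (auto simp: indicator_def)
    qed
    have "AE w in M. indicator E w * p (S i w) (A i w) s' = 0"
      using integral_nonneg_eq_0_iff_AE[OF intg] z mdp_nonneg[OF mdp] by simp
    with AE_space show ?thesis by eventually_elim (auto simp: E_def indicator_def split: if_splits)
  qed
  have "AE w in M. \<forall>i s'. val i s' w \<notin> {zmin..zmax} \<longrightarrow> p (S i w) (A i w) s' = 0"
    unfolding AE_all_countable using one by blast
  then show ?thesis
  proof eventually_elim
    case (elim w)
    show ?case
    proof (intro allI impI)
      fix i s' assume "0 < p (S i w) (A i w) s'"
      then have "p (S i w) (A i w) s' \<noteq> 0" by simp
      then show "val i s' w \<in> {zmin..zmax}" using elim by blast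
    qed
  qed
qed

end


lemma trunc_sum:
  fixes a :: "nat \<Rightarrow> real"
  assumes a0: "\<And>i. 0 \<le> a i" and K0: "0 \<le> K"
  shows "(\<Sum>i<n. if (\<Sum>j<Suc i. a j) \<le> K then a i else 0) \<le> K \<and>
         (\<Sum>i<n. if (\<Sum>j<Suc i. a j) \<le> K then a i else 0) \<le> (\<Sum>i<n. a i)"
proof (induction n)
  case 0 then show ?case using K0 by simp
next
  case (Suc n)
  show ?case
  proof (cases "(\<Sum>j<Suc n. a j) \<le> K")
    case True
    then show ?thesis using Suc.IH by simp
  next
    case False
    then show ?thesis using Suc.IH a0[of n] by simp
  qed
qed

lemma abs_le_1_sq: "\<bar>x::real\<bar> \<le> 1 + x\<^sup>2"
proof (cases "\<bar>x\<bar> \<le> 1")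
  case True then show ?thesis by (smt (verit) zero_le_power2)
next
  case False
  then have "\<bar>x\<bar> * 1 \<le> \<bar>x\<bar> * \<bar>x\<bar>" by (intro mult_left_mono) auto
  then show ?thesis by (simp add: power2_eq_square abs_mult_self_eq)
qed

context setting begin

definition clamp :: "real \<Rightarrow> real" where "clamp x = max zmin (min zmax x)"
definition phi :: "nat \<Rightarrow> 's \<Rightarrow> 'w \<Rightarrow> real" where "phi i s' w = exp (- \<beta> * clamp (val i s' w))"
definition hbar :: "nat \<Rightarrow> 'w \<Rightarrow> real" where "hbar i w = (\<Sum>s'\<in>UNIV. p (S i w) (A i w) s' * phi i s' w)"
definition xi :: "nat \<Rightarrow> 'w \<Rightarrow> real" where "xi i w = hbar i w - phi i (S' i w) w"
definition Cx :: real where "Cx = exp (- \<beta> * zmin)"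

lemma phi_F: "phi i s' \<in> borel_measurable (F i)"
proof -
  note [measurable] = val_F[of i s']
  show ?thesis unfolding phi_def[abs_def] clamp_def by measurable
qed

lemma phi_bnd: "0 < phi i s' w" "phi i s' w \<le> Cx"
proof -
  show "0 < phi i s' w" by (simp add: phi_def)
  have "zmin \<le> clamp (val i s' w)" by (simp add: clamp_def)
  then have "- \<beta> * clamp (val i s' w) \<le> - \<beta> * zmin" using beta_pos by simp
  then show "phi i s' w \<le> Cx" by (simp add: phi_def Cx_def)
qed

lemma hbar_F: "hbar i \<in> borel_measurable (F i)"
  unfolding hbar_def[abs_def]
  by (intro borel_measurable_sum borel_measurable_times pSA_F phi_F)

lemma hbar_bnd: "0 \<le> hbar i w" "hbar i w \<le> Cx"
proof -
  show "0 \<le> hbar i w" unfolding hbar_def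
    by (intro sum_nonneg mult_nonneg_nonneg mdp_nonneg[OF mdp]) (simp add: less_imp_le phi_bnd)
  have "hbar i w \<le> (\<Sum>s'\<in>UNIV. p (S i w) (A i w) s' * Cx)" unfolding hbar_def
    by (intro sum_mono mult_left_mono phi_bnd mdp_nonneg[OF mdp])
  also have "\<dots> = Cx" using mdp_sum1[OF mdp] by (simp add: sum_distrib_right[symmetric])
  finally show "hbar i w \<le> Cx" .
qed

lemma xi_F: "xi i \<in> borel_measurable (F (Suc i))"
proof -
  have h: "hbar i \<in> borel_measurable (F (Suc i))" by (rule FmonoF[OF hbar_F]) simp
  have ph: "(\<lambda>w. phi i (S' i w) w) \<in> borel_measurable (F (Suc i))"
    by (rule comp_s[OF _ S'_F[of i "Suc i"]]) (auto intro: FmonoF[OF phi_F])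
  show ?thesis unfolding xi_def[abs_def] by (rule borel_measurable_diff[OF h ph])
qed

lemma xi_bnd: "\<bar>xi i w\<bar> \<le> Cx"
  using hbar_bnd[of i w] phi_bnd[of i "S' i w" w] by (simp add: xi_def abs_le_iff)

lemma xi_mart:
  assumes g: "g \<in> borel_measurable (F i)" and gb: "\<And>w. w \<in> space M \<Longrightarrow> \<bar>g w\<bar> \<le> B"
  shows "(\<integral>w. g w * xi i w \<partial>M) = 0"
proof -
  have B0: "0 \<le> B" using gb by (metis abs_ge_zero order_trans not_empty ex_in_conv)
  have gM: "g \<in> borel_measurable M" by (rule FM[OF g])
  have Cx0: "0 \<le> Cx" by (simp add: Cx_def)
  have f_F: "(\<lambda>w. g w * phi i s' w) \<in> borel_measurable (F i)" for s'
    by (rule borel_measurable_times[OF g phi_F])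
  have f_b: "\<bar>g w * phi i s' w\<bar> \<le> B * Cx" if "w \<in> space M" for w s'
    unfolding abs_mult using gb[OF that] phi_bnd[of i s' w] B0
    by (intro mult_mono) auto
  have ci: "(\<integral>w. (g w * phi i s' w) * indicator {w. S' i w = s'} w \<partial>M) = (\<integral>w. (g w * phi i s' w) * p (S i w) (A i w) s' \<partial>M)" for s'
    by (rule cond_int[OF f_F f_b])
  have int1: "integrable M (\<lambda>w. (g w * phi i s' w) * indicator {w. S' i w = s'} w)" for s'
  proof (rule integrable_bdd[where B="B * Cx"])
    show "(\<lambda>w. (g w * phi i s' w) * indicator {w. S' i w = s'} w) \<in> borel_measurable M"
      using FM[OF f_F[of s']] ind_S'_M by (rule borel_measurable_times)
    fix w assume w: "w \<in> space M"
    show "\<bar>(g w * phi i s' w) * indicator {w. S' i w = s'} w\<bar> \<le> B * Cx"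
      using f_b[OF w, of s'] B0 Cx0 by (auto simp: indicator_def)
  qed
  have int2: "integrable M (\<lambda>w. (g w * phi i s' w) * p (S i w) (A i w) s')" for s'
  proof (rule integrable_bdd[where B="B * Cx"])
    show "(\<lambda>w. (g w * phi i s' w) * p (S i w) (A i w) s') \<in> borel_measurable M"
      using FM[OF f_F[of s']] FM[OF pSA_F] by (rule borel_measurable_times)
    fix w assume w: "w \<in> space M"
    have p1: "p (S i w) (A i w) s' \<le> 1"
      using member_le_sum[of s' UNIV "p (S i w) (A i w)"] mdp_sum1[OF mdp] mdp_nonneg[OF mdp] by auto
    have "\<bar>(g w * phi i s' w) * p (S i w) (A i w) s'\<bar> \<le> (B * Cx) * 1"
      unfolding abs_mult[of "g w * phi i s' w"] using f_b[OF w, of s'] p1 mdp_nonneg[OF mdp] B0 Cx0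
      by (intro mult_mono) auto
    then show "\<bar>(g w * phi i s' w) * p (S i w) (A i w) s'\<bar> \<le> B * Cx" by simp
  qed
  have eq1: "(\<lambda>w. g w * phi i (S' i w) w) = (\<lambda>w. \<Sum>s'\<in>UNIV. (g w * phi i s' w) * indicator {w. S' i w = s'} w)"
  proof
    fix w
    have "(\<Sum>s'\<in>UNIV. (g w * phi i s' w) * indicator {w. S' i w = s'} w) = (\<Sum>s'\<in>UNIV. if S' i w = s' then g w * phi i s' w else 0)"
      by (intro sum.cong refl) (simp add: indicator_def)
    also have "\<dots> = g w * phi i (S' i w) w" by (simp add: sum.delta)
    finally show "g w * phi i (S' i w) w = (\<Sum>s'\<in>UNIV. (g w * phi i s' w) * indicator {w. S' i w = s'} w)" by simp
  qed
  have eq2: "(\<lambda>w. g w * hbar i w) = (\<lambda>w. \<Sum>s'\<in>UNIV. (g w * phi i s' w) * p (S i w) (A i w) s')"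
    by (simp add: hbar_def sum_distrib_left mult_ac fun_eq_iff)
  have "(\<integral>w. g w * xi i w \<partial>M) = (\<integral>w. g w * hbar i w - g w * phi i (S' i w) w \<partial>M)"
    by (simp add: xi_def right_diff_distrib)
  also have "\<dots> = (\<integral>w. g w * hbar i w \<partial>M) - (\<integral>w. g w * phi i (S' i w) w \<partial>M)"
  proof (rule Bochner_Integration.integral_diff)
    show "integrable M (\<lambda>w. g w * hbar i w)" unfolding eq2 by (intro Bochner_Integration.integrable_sum int2)
    show "integrable M (\<lambda>w. g w * phi i (S' i w) w)" unfolding eq1 by (intro Bochner_Integration.integrable_sum int1)
  qed
  also have "(\<integral>w. g w * hbar i w \<partial>M) = (\<Sum>s'\<in>UNIV. \<integral>w. (g w * phi i s' w) * p (S i w) (A i w) s' \<partial>M)"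
    unfolding eq2 by (intro Bochner_Integration.integral_sum int2)
  also have "(\<integral>w. g w * phi i (S' i w) w \<partial>M) = (\<Sum>s'\<in>UNIV. \<integral>w. (g w * phi i s' w) * indicator {w. S' i w = s'} w \<partial>M)"
    unfolding eq1 by (intro Bochner_Integration.integral_sum int1)
  finally show ?thesis by (simp add: ci)
qed

lemma mg_xi: "mg M F xi Cx"
  by unfold_locales (auto intro: subF filtF xi_F xi_bnd xi_mart)

end


context setting begin

definition ccw :: "'s \<Rightarrow> 'a \<Rightarrow> nat \<Rightarrow> 'w \<Rightarrow> real" where
  "ccw s a i w = (if (S i w, A i w) = (s, a) then \<eta> i w else 0)"
definition Tsq :: "'s \<Rightarrow> 'a \<Rightarrow> nat \<Rightarrow> 'w \<Rightarrow> real" where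
  "Tsq s a i w = (\<Sum>j<Suc i. (ccw s a j w)\<^sup>2)"
definition ut :: "real \<Rightarrow> 's \<Rightarrow> 'a \<Rightarrow> nat \<Rightarrow> 'w \<Rightarrow> real" where
  "ut K s a i w = (if Tsq s a i w \<le> K then ccw s a i w else 0)"

lemma ccw_F: "ccw s a i \<in> borel_measurable (F i)"
proof -
  have Si: "S i \<in> measurable (F i) (count_space UNIV)" by (rule S_F) simp
  have Ai: "A i \<in> measurable (F i) (count_space UNIV)" by (rule A_F) simp
  have "Measurable.pred (F i) (\<lambda>w. s = S i w \<and> a = A i w)" using Si Ai by measurable
  then have pr: "Measurable.pred (F i) (\<lambda>w. (S i w, A i w) = (s, a))" by (simp add: eq_commute)
  have ei: "\<eta> i \<in> borel_measurable (F i)" by (rule eta_F) simp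
  show ?thesis unfolding ccw_def[abs_def]
    by (rule measurable_If[OF ei _ pr[unfolded pred_def]]) simp
qed

lemma ccw_Fj: "j \<le> i \<Longrightarrow> ccw s a j \<in> borel_measurable (F i)"
  by (rule FmonoF[OF ccw_F])

lemma Tsq_F: "Tsq s a i \<in> borel_measurable (F i)"
  unfolding Tsq_def[abs_def]
proof (rule borel_measurable_sum)
  fix j assume "j \<in> {..<Suc i}"
  then have "j \<le> i" by simp
  then have cj: "ccw s a j \<in> borel_measurable (F i)" by (rule ccw_Fj)
  show "(\<lambda>w. (ccw s a j w)\<^sup>2) \<in> borel_measurable (F i)"
    unfolding power2_eq_square by (rule borel_measurable_times[OF cj cj])
qed

lemma ut_F: "ut K s a i \<in> borel_measurable (F i)"
proof -
  have "Measurable.pred (F i) (\<lambda>w. Tsq s a i w \<le> K)" using Tsq_F by measurable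
  then show ?thesis unfolding ut_def[abs_def]
    by (intro measurable_If[OF ccw_F]) (simp_all add: pred_def)
qed

lemma ccw_sq_le: "(ccw s a i w)\<^sup>2 \<le> Tsq s a i w"
  unfolding Tsq_def by (rule member_le_sum) auto

lemma ut_bnd: "0 \<le> K \<Longrightarrow> \<bar>ut K s a i w\<bar> \<le> 1 + K"
  using abs_le_1_sq[of "ccw s a i w"] ccw_sq_le[of s a i w] by (auto simp: ut_def)

lemma ut_sq:
  assumes w: "w \<in> space M" and K0: "0 \<le> K"
  shows "(\<Sum>i<n. (ut K s a i w)\<^sup>2) \<le> K"
proof -
  have "(\<Sum>i<n. (ut K s a i w)\<^sup>2) = (\<Sum>i<n. if (\<Sum>j<Suc i. (ccw s a j w)\<^sup>2) \<le> K then (ccw s a i w)\<^sup>2 else 0)"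
    by (intro sum.cong refl) (simp add: ut_def Tsq_def)
  also have "\<dots> \<le> K" using trunc_sum[of "\<lambda>j. (ccw s a j w)\<^sup>2" K n] K0 by simp
  finally show ?thesis .
qed

lemma ut_conv:
  assumes K0: "0 \<le> K"
  shows "AE w in M. summable (\<lambda>i. ut K s a i w * xi i w)"
proof -
  interpret mg M F xi Cx by (rule mg_xi)
  interpret mgu M F xi Cx "ut K s a" "1 + K" K
    by unfold_locales (auto intro: ut_F ut_bnd[OF K0] ut_sq[OF _ K0])
  show ?thesis by (rule as_conv)
qed

lemma noise_ae: "AE w in M. \<forall>s a. summable (\<lambda>i. ccw s a i w * xi i w)"
proof -
  have all: "AE w in M. \<forall>(K::nat) s a. summable (\<lambda>i. ut (real K) s a i w * xi i w)"
    unfolding AE_all_countable by (intro allI ut_conv) simp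
  show ?thesis using all sum_sq AE_space
  proof eventually_elim
    case (elim w)
    show ?case
    proof (intro allI)
      fix s a
      have w: "w \<in> space M" using elim by blast
      have eq: "(\<lambda>i. (ccw s a i w)\<^sup>2) = (\<lambda>i. if (S i w, A i w) = (s, a) then (\<eta> i w)\<^sup>2 else 0)"
        by (simp add: ccw_def fun_eq_iff)
      have lt: "(\<Sum>i. ennreal (if (S i w, A i w) = (s, a) then (\<eta> i w)\<^sup>2 else 0)) < \<infinity>"
        using elim by blast
      then have "(\<Sum>i. ennreal (if (S i w, A i w) = (s, a) then (\<eta> i w)\<^sup>2 else 0)) \<noteq> \<top>"
        by simp
      then have sm: "summable (\<lambda>i. (ccw s a i w)\<^sup>2)" unfolding eq
        by (intro summable_suminf_not_top) auto
      define K where "K = nat \<lceil>suminf (\<lambda>i. (ccw s a i w)\<^sup>2)\<rceil>"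
      have TK: "Tsq s a i w \<le> real K" for i
      proof -
        have "Tsq s a i w \<le> suminf (\<lambda>i. (ccw s a i w)\<^sup>2)"
          unfolding Tsq_def by (rule sum_le_suminf[OF sm]) auto
        also have "\<dots> \<le> real K" unfolding K_def by linarith
        finally show ?thesis .
      qed
      have "(\<lambda>i. ut (real K) s a i w * xi i w) = (\<lambda>i. ccw s a i w * xi i w)"
        using TK by (simp add: ut_def fun_eq_iff)
      moreover have "summable (\<lambda>i. ut (real K) s a i w * xi i w)" using elim by blast
      ultimately show "summable (\<lambda>i. ccw s a i w * xi i w)" by simp
    qed
  qed
qed

end


context setting begin

lemma eps_xi:
  assumes g1: "\<forall>i s'. 0 < p (S i w) (A i w) s' \<longrightarrow> val i s' w \<in> {zmin..zmax}"
    and g2: "\<forall>i. 0 < p (S i w) (A i w) (S' i w)"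
  shows "exp (\<beta> * qq i w (S i w) (A i w)) * Ew \<beta> p r (qq i w) (S i w) (A i w) - exp (- \<beta> * zit \<beta> r \<eta> S A S' i w) = xi i w"
proof -
  have t: "exp (\<beta> * qq i w (S i w) (A i w)) * (p (S i w) (A i w) s' * exp (- \<beta> * (r (S i w) (A i w) s' + Max (range (qq i w s')))))
      = p (S i w) (A i w) s' * phi i s' w" for s'
  proof (cases "0 < p (S i w) (A i w) s'")
    case True
    then have vr: "val i s' w \<in> {zmin..zmax}" using g1 by blast
    then have cl: "clamp (val i s' w) = val i s' w" by (auto simp: clamp_def)
    have "exp (\<beta> * qq i w (S i w) (A i w)) * exp (- \<beta> * (r (S i w) (A i w) s' + Max (range (qq i w s'))))
        = exp (- \<beta> * val i s' w)"
      by (simp add: val_def exp_add[symmetric] algebra_simps)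
    then show ?thesis by (simp add: phi_def cl mult.left_commute)
  next
    case False
    then have "p (S i w) (A i w) s' = 0" using mdp_nonneg[OF mdp, of "S i w" "A i w" s'] by simp
    then show ?thesis by simp
  qed
  have h: "exp (\<beta> * qq i w (S i w) (A i w)) * Ew \<beta> p r (qq i w) (S i w) (A i w) = hbar i w"
    unfolding Ew_def hbar_def sum_distrib_left by (rule sum.cong[OF refl t])
  have "val i (S' i w) w \<in> {zmin..zmax}" using g1 g2 by blast
  then have "exp (- \<beta> * zit \<beta> r \<eta> S A S' i w) = phi i (S' i w) w"
    by (auto simp: zit_val phi_def clamp_def)
  then show ?thesis using h by (simp add: xi_def)
qed

definition good :: "'w \<Rightarrow> bool" where
  "good w \<longleftrightarrow> w \<in> space M \<and>
    (\<forall>i s'. 0 < p (S i w) (A i w) s' \<longrightarrow> val i s' w \<in> {zmin..zmax}) \<and>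
    (\<forall>i. 0 < p (S i w) (A i w) (S' i w)) \<and>
    (\<forall>s a. summable (\<lambda>i. ccw s a i w * xi i w)) \<and>
    (\<forall>s a. (\<Sum>i. ennreal (if (S i w, A i w) = (s, a) then \<eta> i w else 0)) = \<infinity>) \<and>
    (\<forall>s a. (\<Sum>i. ennreal (if (S i w, A i w) = (s, a) then (\<eta> i w)\<^sup>2 else 0)) < \<infinity>)"

lemma AE_good: "AE w in M. good w"
  using AE_space G1_ae G2_ae noise_ae sum_inf sum_sq
  by eventually_elim (simp add: good_def)

lemma good_conv:
  assumes g: "good w"
  shows "\<exists>L. (\<forall>s a. L s a = Top \<beta> p r L s a) \<and> (\<forall>a. L e a = 0) \<and> (\<forall>s a. (\<lambda>i. qq i w s a) \<longlonglongrightarrow> L s a)"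
proof -
  have w: "w \<in> space M" using g by (simp add: good_def)
  have g1: "\<forall>i s'. 0 < p (S i w) (A i w) s' \<longrightarrow> val i s' w \<in> {zmin..zmax}" using g by (simp add: good_def)
  have g2: "\<forall>i. 0 < p (S i w) (A i w) (S' i w)" using g by (simp add: good_def)
  have en: "0 \<le> \<eta> i w" for i using eta_nonneg[OF w] .
  interpret det p r e \<beta> zmin zmax "\<lambda>i. qq i w" "\<lambda>i. \<eta> i w" "\<lambda>i. S i w" "\<lambda>i. A i w" "\<lambda>i. S' i w" "\<lambda>i. zit \<beta> r \<eta> S A S' i w"
  proof unfold_locales
    show "transient_mdp p r e" by (rule mdp)
    show "\<beta> > 0" by (rule beta_pos)
    show "\<And>s a. qq 0 w s a = 0" by simp
    show "\<And>i. zit \<beta> r \<eta> S A S' i w = r (S i w) (A i w) (S' i w) + Max (range (qq i w (S' i w))) - qq i w (S i w) (A i w)"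
      by (simp add: zit_def Let_def)
    show "\<And>i s a. qq (Suc i) w s a = (if (s, a) = (S i w, A i w) then qq i w s a - \<eta> i w * (exp (- \<beta> * zit \<beta> r \<eta> S A S' i w) - 1) else qq i w s a)"
      by (simp add: zit_def Let_def)
    show "\<And>i. 0 \<le> \<eta> i w" by (rule en)
    show "\<And>i s'. 0 < p (S i w) (A i w) s' \<Longrightarrow> r (S i w) (A i w) s' + Max (range (qq i w s')) - qq i w (S i w) (A i w) \<in> {zmin..zmax}"
      using g1 by (simp add: val_def)
    show "\<And>i. 0 < p (S i w) (A i w) (S' i w)" using g2 by simp
    show "\<not> summable (\<lambda>i. if (S i w, A i w) = (s, a) then \<eta> i w else 0)" for s a
    proof
      assume sm: "summable (\<lambda>i. if (S i w, A i w) = (s, a) then \<eta> i w else 0)"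
      have "(\<Sum>i. ennreal (if (S i w, A i w) = (s, a) then \<eta> i w else 0)) = ennreal (\<Sum>i. if (S i w, A i w) = (s, a) then \<eta> i w else 0)"
        by (rule suminf_ennreal2[OF _ sm]) (simp add: en)
      moreover have "(\<Sum>i. ennreal (if (S i w, A i w) = (s, a) then \<eta> i w else 0)) = \<infinity>"
        using g by (simp add: good_def)
      ultimately show False by simp
    qed
    show "(\<lambda>i. if (S i w, A i w) = (s, a) then \<eta> i w else 0) \<longlonglongrightarrow> 0" for s a
    proof -
      have lt: "(\<Sum>i. ennreal (if (S i w, A i w) = (s, a) then (\<eta> i w)\<^sup>2 else 0)) < \<infinity>"
        using g by (simp add: good_def)
      then have "(\<Sum>i. ennreal (if (S i w, A i w) = (s, a) then (\<eta> i w)\<^sup>2 else 0)) \<noteq> \<top>" by simp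
      then have "summable (\<lambda>i. if (S i w, A i w) = (s, a) then (\<eta> i w)\<^sup>2 else 0)"
        by (intro summable_suminf_not_top) auto
      then have "(\<lambda>i. if (S i w, A i w) = (s, a) then (\<eta> i w)\<^sup>2 else 0) \<longlonglongrightarrow> 0"
        by (rule summable_LIMSEQ_zero)
      then have "(\<lambda>i. sqrt (if (S i w, A i w) = (s, a) then (\<eta> i w)\<^sup>2 else 0)) \<longlonglongrightarrow> sqrt 0"
        by (rule tendsto_real_sqrt)
      moreover have "(\<lambda>i. sqrt (if (S i w, A i w) = (s, a) then (\<eta> i w)\<^sup>2 else 0)) = (\<lambda>i. if (S i w, A i w) = (s, a) then \<eta> i w else 0)"
        using en by (simp add: fun_eq_iff)
      ultimately show ?thesis by simp
    qed
    show "summable (\<lambda>i. if (S i w, A i w) = (s, a) then \<eta> i w * (exp (\<beta> * qq i w (S i w) (A i w)) * Ew \<beta> p r (qq i w) (S i w) (A i w) - exp (- \<beta> * zit \<beta> r \<eta> S A S' i w)) else 0)" for s a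
    proof -
      have "(\<lambda>i. if (S i w, A i w) = (s, a) then \<eta> i w * (exp (\<beta> * qq i w (S i w) (A i w)) * Ew \<beta> p r (qq i w) (S i w) (A i w) - exp (- \<beta> * zit \<beta> r \<eta> S A S' i w)) else 0)
          = (\<lambda>i. ccw s a i w * xi i w)"
        by (simp only: eps_xi[OF g1 g2]) (simp add: ccw_def fun_eq_iff)
      moreover have "summable (\<lambda>i. ccw s a i w * xi i w)" using g by (simp add: good_def)
      ultimately show ?thesis by simp
    qed
  qed
  show ?thesis by (rule det_conv)
qed

lemma fix_unique:
  assumes "\<And>s a. L s a = Top \<beta> p r L s a" "\<And>a. L e a = 0"
    and "\<And>s a. L' s a = Top \<beta> p r L' s a" "\<And>a. L' e a = 0"
  shows "L = L'"
proof -
  have x1: "L s a \<le> Top \<beta> p r L s a" for s a using assms(1)[of s a] by simp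
  have y1: "Top \<beta> p r L s a \<le> L s a" for s a using assms(1)[of s a] by simp
  have x2: "L' s a \<le> Top \<beta> p r L' s a" for s a using assms(3)[of s a] by simp
  have y2: "Top \<beta> p r L' s a \<le> L' s a" for s a using assms(3)[of s a] by simp
  have "L s a \<le> L' s a" for s a
    by (rule comparison_principle[OF mdp beta_pos x1 y2 assms(2) assms(4)])
  moreover have "L' s a \<le> L s a" for s a
    by (rule comparison_principle[OF mdp beta_pos x2 y1 assms(4) assms(2)])
  ultimately show ?thesis by (intro ext order.antisym)
qed

theorem main_setting:
  "\<exists>qinf :: 's \<Rightarrow> 'a \<Rightarrow> real. qinf = Bhat \<beta> p r qinf \<and> (AE w in M. \<forall>s a. (\<lambda>i. qq i w s a) \<longlonglongrightarrow> qinf s a)"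
proof -
  obtain w0 where w0: "good w0"
  proof (rule ccontr)
    assume "\<not> thesis"
    with that have "\<forall>w. \<not> good w" by blast
    with AE_good have "AE w in M. False" by simp
    then show False by (simp add: AE_False)
  qed
  obtain L0 where L0: "\<And>s a. L0 s a = Top \<beta> p r L0 s a" "\<And>a. L0 e a = 0"
    "\<And>s a. (\<lambda>i. qq i w0 s a) \<longlonglongrightarrow> L0 s a"
    using good_conv[OF w0] by blast
  show ?thesis
  proof (intro exI conjI)
    show "L0 = Bhat \<beta> p r L0"
      by (intro ext) (simp add: Bhat_eq[OF mdp beta_pos] L0(1)[symmetric])
    show "AE w in M. \<forall>s a. (\<lambda>i. qq i w s a) \<longlonglongrightarrow> L0 s a"
      using AE_good
    proof eventually_elim
      case (elim w)
      obtain L where L: "\<And>s a. L s a = Top \<beta> p r L s a" "\<And>a. L e a = 0"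
        "\<And>s a. (\<lambda>i. qq i w s a) \<longlonglongrightarrow> L s a"
        using good_conv[OF elim] by blast
      have "L = L0" by (rule fix_unique) (use L L0 in auto)
      then show ?case using L(3) by simp
    qed
  qed
qed

end

theorem mainTheorem5:
  fixes M :: "'w measure"
    and p :: "'s::finite \<Rightarrow> 'a::finite \<Rightarrow> 's \<Rightarrow> real"
    and r :: "'s \<Rightarrow> 'a \<Rightarrow> 's \<Rightarrow> real"
    and e :: 's
    and \<beta> :: real
    and \<eta> :: "nat \<Rightarrow> 'w \<Rightarrow> real"
    and S :: "nat \<Rightarrow> 'w \<Rightarrow> 's" and A :: "nat \<Rightarrow> 'w \<Rightarrow> 'a" and S' :: "nat \<Rightarrow> 'w \<Rightarrow> 's"
    and zmin zmax :: real
  assumes "prob_space M"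
    and mdp: "transient_mdp p r e"
    and beta_pos: "\<beta> > 0"
    and meas_eta: "\<And>i. \<eta> i \<in> borel_measurable M"
    and meas_S: "\<And>i. S i \<in> measurable M (count_space UNIV)"
    and meas_A: "\<And>i. A i \<in> measurable M (count_space UNIV)"
    and meas_S': "\<And>i. S' i \<in> measurable M (count_space UNIV)"
    and eta_nonneg: "\<And>i w. w \<in> space M \<Longrightarrow> 0 \<le> \<eta> i w"
    and cond_prob: "\<And>i s'. AE w in M.
          real_cond_exp M (hist_sigma M \<eta> S A S' i)
            (\<lambda>w. indicator {w. S' i w = s'} w) w = p (S i w) (A i w) s'"
    and sum_inf: "AE w in M. \<forall>s a.
          (\<Sum>i. ennreal (if (S i w, A i w) = (s, a) then \<eta> i w else 0)) = \<infinity>"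
    and sum_sq: "AE w in M. \<forall>s a.
          (\<Sum>i. ennreal (if (S i w, A i w) = (s, a) then (\<eta> i w)\<^sup>2 else 0)) < \<infinity>"
    and zle: "zmin \<le> zmax"
    and z_bound: "AE w in M. \<forall>i. zit \<beta> r \<eta> S A S' i w \<in> {zmin..zmax}"
  shows "\<exists>qinf :: 's \<Rightarrow> 'a \<Rightarrow> real.
           qinf = Bhat \<beta> p r qinf \<and>
           (AE w in M. \<forall>s a. (\<lambda>i. qit \<beta> r \<eta> S A S' i w s a) \<longlonglongrightarrow> qinf s a)"
  proof -
  interpret setting M p r e \<beta> \<eta> S A S' zmin zmax
    using assms by (simp add: setting_def setting_axioms_def)
  show ?thesis by (rule main_setting)
qed

end
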